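(* Let $E$ be a graph, $K$ a field with involution, $R$ an involutive $K$-algebra whose involution is positive definite, and $t$ a canonical, $K$-linear, $R$-valued trace on $L_K(E)$. Then $t$ is faithful if and only if both (P) $t\big(v-\sum_{e\in I}\mathbf{r}(e)\big)\ge 0$ for every vertex $v$ and every finite subset $I\subseteq\mathbf{s}^{-1}(v)$, and (F) $t(v)>0$ for every vertex $v$ hold.
   Context: A (directed) graph $E=(E^0,E^1,\mathbf{s},\mathbf{r})$ has vertex set $E^0$, edge set $E^1$, source and range maps; no finiteness or countability is assumed. A path is a vertex $v$ (length $0$, $\mathbf{s}(v)=\mathbf{r}(v)=v$) or a sequence $p=e_1\cdots e_n$ of edges with $\mathbf{r}(e_i)=\mathbf{s}(e_{i+1})$, $\mathbf{s}(p)=\mathbf{s}(e_1)$, $\mathbf{r}(p)=\mathbf{r}(e_n)$. A vertex $v$ is regular if $\mathbf{s}^{-1}(v)$ is nonempty and finite. $K$ is a field with an arbitrary involution $a\mapsto a^*$. $L_K(E)$ is the free $K$-algebra generated by $E^0\cup E^1\cup\{e^*:e\in E^1\}$ subject to (V) $vw=\delta_{v,w}v$; (E1) $\mathbf{s}(e)e=e\mathbf{r}(e)=e$; (E2) $\mathbf{r}(e)e^*=e^*\mathbf{s}(e)=e^*$; (CK1) $e^*f=\delta_{e,f}\mathbf{r}(e)$; (CK2) $v=\sum_{e\in\mathbf{s}^{-1}(v)}ee^*$ for regular $v$; with $p^*=e_n^*\cdots e_1^*$, $v^*=v$, it is involutive via $(\sum a_ip_iq_i^* )^*=\sum a_i^*q_ip_i^*$.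 An involutive $K$-algebra is a $K$-algebra with an involution (additive, $(xy)^*=y^*x^*$, $x^{**}=x$) such that $(ax)^*=a^*x^*$. $x\ge0$ means $x$ is a finite sum of elements $zz^*$; $x>0$ means $x\ge0$ and $x\ne0$; $x\ge y$ means $x-y\ge0$. The involution is positive definite if $\sum_i x_ix_i^*=0$ implies all $x_i=0$. A trace is an additive map with $t(xy)=t(yx)$; $K$-linear means $t(ax)=at(x)$; $t$ is faithful if $x>0$ implies $t(x)>0$. A trace $t$ on $L_K(E)$ is canonical if $t(pq^* )=\delta_{p,q}\,t(\mathbf{r}(p))$ for all paths $p,q$ with $\mathbf{r}(p)=\mathbf{r}(q)$. *)

theory Defs
  imports Main
begin

text \<open>A graph is given by a vertex type 'v (= E^0), an edge type 'e (= E^1)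
  and source/range maps s r :: 'e => 'v.  Generators of the free algebra:
  vertices, edges and ghost edges e^*.\<close>

datatype ('v, 'e) gen = V 'v | Ed 'e | Gh 'e

fun gswap :: "('v, 'e) gen \<Rightarrow> ('v, 'e) gen" where
  "gswap (V v) = V v"
| "gswap (Ed e) = Gh e"
| "gswap (Gh e) = Ed e"

definition wstar :: "('v, 'e) gen list \<Rightarrow> ('v, 'e) gen list" where
  "wstar w = rev (map gswap w)"

text \<open>Elements of the (non-unital) free K-algebra on the generators:
  finitely supported K-valued functions on nonempty words.\<close>

definition Fset :: "(('v, 'e) gen list \<Rightarrow> 'k::field) set" where
  "Fset = {f. finite {w. f w \<noteq> 0} \<and> f [] = 0}"

definition fzero :: "('v, 'e) gen list \<Rightarrow> 'k::field" where
  "fzero = (\<lambda>w. 0)"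

definition fadd :: "(('v, 'e) gen list \<Rightarrow> 'k::field) \<Rightarrow> (('v, 'e) gen list \<Rightarrow> 'k) \<Rightarrow> ('v, 'e) gen list \<Rightarrow> 'k" where
  "fadd f g = (\<lambda>w. f w + g w)"

definition fsub :: "(('v, 'e) gen list \<Rightarrow> 'k::field) \<Rightarrow> (('v, 'e) gen list \<Rightarrow> 'k) \<Rightarrow> ('v, 'e) gen list \<Rightarrow> 'k" where
  "fsub f g = (\<lambda>w. f w - g w)"

definition fscal :: "'k::field \<Rightarrow> (('v, 'e) gen list \<Rightarrow> 'k) \<Rightarrow> ('v, 'e) gen list \<Rightarrow> 'k" where
  "fscal a f = (\<lambda>w. a * f w)"

definition fmul :: "(('v, 'e) gen list \<Rightarrow> 'k::field) \<Rightarrow> (('v, 'e) gen list \<Rightarrow> 'k) \<Rightarrow> ('v, 'e) gen list \<Rightarrow> 'k" where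
  "fmul f g = (\<lambda>w. \<Sum>i\<in>{0..length w}. f (take i w) * g (drop i w))"

definition fstar :: "('k::field \<Rightarrow> 'k) \<Rightarrow> (('v, 'e) gen list \<Rightarrow> 'k) \<Rightarrow> ('v, 'e) gen list \<Rightarrow> 'k" where
  "fstar ks f = (\<lambda>w. ks (f (wstar w)))"

definition mon :: "('v, 'e) gen list \<Rightarrow> ('v, 'e) gen list \<Rightarrow> 'k::field" where
  "mon w = (\<lambda>u. if u = w then 1 else 0)"

definition fsum :: "('a \<Rightarrow> ('v, 'e) gen list \<Rightarrow> 'k::field) \<Rightarrow> 'a set \<Rightarrow> ('v, 'e) gen list \<Rightarrow> 'k" where
  "fsum g A = (\<lambda>w. \<Sum>a\<in>A. g a w)"

definition fsum_list :: "(('v, 'e) gen list \<Rightarrow> 'k::field) list \<Rightarrow> ('v, 'e) gen list \<Rightarrow> 'k" where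
  "fsum_list xs = (\<lambda>w. \<Sum>f\<leftarrow>xs. f w)"

definition regular :: "('e \<Rightarrow> 'v) \<Rightarrow> 'v \<Rightarrow> bool" where
  "regular s v \<longleftrightarrow> {e. s e = v} \<noteq> {} \<and> finite {e. s e = v}"

definition lpa_rels :: "('e \<Rightarrow> 'v) \<Rightarrow> ('e \<Rightarrow> 'v) \<Rightarrow> (('v, 'e) gen list \<Rightarrow> 'k::field) set" where
  "lpa_rels s r =
     {fsub (mon [V v, V w]) (if v = w then mon [V v] else fzero) | v w. True}
   \<union> {fsub (mon [V (s e), Ed e]) (mon [Ed e]) | e. True}
   \<union> {fsub (mon [Ed e, V (r e)]) (mon [Ed e]) | e. True}
   \<union> {fsub (mon [V (r e), Gh e]) (mon [Gh e]) | e. True}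
   \<union> {fsub (mon [Gh e, V (s e)]) (mon [Gh e]) | e. True}
   \<union> {fsub (mon [Gh e, Ed f]) (if e = f then mon [V (r e)] else fzero) | e f. True}
   \<union> {fsub (mon [V v]) (fsum (\<lambda>e. mon [Ed e, Gh e]) {e. s e = v}) | v. regular s v}"

text \<open>The two-sided ideal of the free algebra generated by the relations;
  L_K(E) is the quotient Fset / lpa_ideal s r.\<close>
inductive_set lpa_ideal :: "('e \<Rightarrow> 'v) \<Rightarrow> ('e \<Rightarrow> 'v) \<Rightarrow> (('v, 'e) gen list \<Rightarrow> 'k::field) set"
  for s r where
  rel: "x \<in> lpa_rels s r \<Longrightarrow> x \<in> lpa_ideal s r"
| zero: "fzero \<in> lpa_ideal s r"
| add: "x \<in> lpa_ideal s r \<Longrightarrow> y \<in> lpa_ideal s r \<Longrightarrow> fadd x y \<in> lpa_ideal s r"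
| scal: "x \<in> lpa_ideal s r \<Longrightarrow> fscal a x \<in> lpa_ideal s r"
| mult_left: "x \<in> lpa_ideal s r \<Longrightarrow> f \<in> Fset \<Longrightarrow> fmul f x \<in> lpa_ideal s r"
| mult_right: "x \<in> lpa_ideal s r \<Longrightarrow> f \<in> Fset \<Longrightarrow> fmul x f \<in> lpa_ideal s r"

datatype ('v, 'e) path = PV 'v | PE "'e list"

fun valid_path :: "('e \<Rightarrow> 'v) \<Rightarrow> ('e \<Rightarrow> 'v) \<Rightarrow> ('v, 'e) path \<Rightarrow> bool" where
  "valid_path s r (PV v) = True"
| "valid_path s r (PE es) \<longleftrightarrow> es \<noteq> [] \<and> (\<forall>i. Suc i < length es \<longrightarrow> r (es ! i) = s (es ! Suc i))"

fun path_range :: "('e \<Rightarrow> 'v) \<Rightarrow> ('v, 'e) path \<Rightarrow> 'v" where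
  "path_range r (PV v) = v"
| "path_range r (PE es) = r (last es)"

fun path_word :: "('v, 'e) path \<Rightarrow> ('v, 'e) gen list" where
  "path_word (PV v) = [V v]"
| "path_word (PE es) = map Ed es"

definition field_involution :: "('k::field \<Rightarrow> 'k) \<Rightarrow> bool" where
  "field_involution ks \<longleftrightarrow>
     (\<forall>a b. ks (a + b) = ks a + ks b) \<and> (\<forall>a b. ks (a * b) = ks b * ks a) \<and> (\<forall>a. ks (ks a) = a)"

text \<open>R (a ring, not necessarily unital) is an involutive K-algebra via the
  scalar action sc and the involution rs.\<close>
definition involutive_algebra :: "('k::field \<Rightarrow> 'k) \<Rightarrow> ('k \<Rightarrow> 'r::ring \<Rightarrow> 'r) \<Rightarrow> ('r \<Rightarrow> 'r) \<Rightarrow> bool" where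
  "involutive_algebra ks sc rs \<longleftrightarrow>
     (\<forall>a x y. sc a (x + y) = sc a x + sc a y) \<and>
     (\<forall>a b x. sc (a + b) x = sc a x + sc b x) \<and>
     (\<forall>a b x. sc (a * b) x = sc a (sc b x)) \<and>
     (\<forall>x. sc 1 x = x) \<and>
     (\<forall>a x y. sc a (x * y) = sc a x * y) \<and>
     (\<forall>a x y. sc a (x * y) = x * sc a y) \<and>
     (\<forall>x y. rs (x + y) = rs x + rs y) \<and>
     (\<forall>x y. rs (x * y) = rs y * rs x) \<and>
     (\<forall>x. rs (rs x) = x) \<and>
     (\<forall>a x. rs (sc a x) = sc (ks a) (rs x))"

definition positive_definite :: "('r::ring \<Rightarrow> 'r) \<Rightarrow> bool" where
  "positive_definite rs \<longleftrightarrow>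
     (\<forall>xs. (\<Sum>x\<leftarrow>xs. x * rs x) = 0 \<longrightarrow> (\<forall>x\<in>set xs. x = 0))"

definition nonneg :: "('r::ring \<Rightarrow> 'r) \<Rightarrow> 'r \<Rightarrow> bool" where
  "nonneg rs x \<longleftrightarrow> (\<exists>zs. x = (\<Sum>z\<leftarrow>zs. z * rs z))"

definition positive :: "('r::ring \<Rightarrow> 'r) \<Rightarrow> 'r \<Rightarrow> bool" where
  "positive rs x \<longleftrightarrow> nonneg rs x \<and> x \<noteq> 0"

text \<open>A map t on representatives defines an additive trace L_K(E) \<rightarrow> R.\<close>
definition lpa_trace :: "('e \<Rightarrow> 'v) \<Rightarrow> ('e \<Rightarrow> 'v) \<Rightarrow> ((('v, 'e) gen list \<Rightarrow> 'k::field) \<Rightarrow> 'r::ring) \<Rightarrow> bool" where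
  "lpa_trace s r t \<longleftrightarrow>
     (\<forall>x\<in>Fset. \<forall>y\<in>Fset. fsub x y \<in> lpa_ideal s r \<longrightarrow> t x = t y) \<and>
     (\<forall>x\<in>Fset. \<forall>y\<in>Fset. t (fadd x y) = t x + t y) \<and>
     (\<forall>x\<in>Fset. \<forall>y\<in>Fset. t (fmul x y) = t (fmul y x))"

definition K_linear_trace :: "('k::field \<Rightarrow> 'r::ring \<Rightarrow> 'r) \<Rightarrow> ((('v, 'e) gen list \<Rightarrow> 'k) \<Rightarrow> 'r) \<Rightarrow> bool" where
  "K_linear_trace sc t \<longleftrightarrow> (\<forall>a. \<forall>x\<in>Fset. t (fscal a x) = sc a (t x))"

definition canonical_trace :: "('e \<Rightarrow> 'v) \<Rightarrow> ('e \<Rightarrow> 'v) \<Rightarrow> ('k::field \<Rightarrow> 'k) \<Rightarrow> ((('v, 'e) gen list \<Rightarrow> 'k) \<Rightarrow> 'r::ring) \<Rightarrow> bool" where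
  "canonical_trace s r ks t \<longleftrightarrow>
     (\<forall>p q. valid_path s r p \<longrightarrow> valid_path s r q \<longrightarrow> path_range r p = path_range r q \<longrightarrow>
        t (fmul (mon (path_word p)) (fstar ks (mon (path_word q))))
        = (if p = q then t (mon [V (path_range r p)]) else 0))"

definition lpa_positive :: "('e \<Rightarrow> 'v) \<Rightarrow> ('e \<Rightarrow> 'v) \<Rightarrow> ('k::field \<Rightarrow> 'k) \<Rightarrow> (('v, 'e) gen list \<Rightarrow> 'k) \<Rightarrow> bool" where
  "lpa_positive s r ks x \<longleftrightarrow>
     (\<exists>zs. set zs \<subseteq> Fset \<and> fsub x (fsum_list (map (\<lambda>z. fmul z (fstar ks z)) zs)) \<in> lpa_ideal s r)
     \<and> x \<notin> lpa_ideal s r"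

definition faithful :: "('e \<Rightarrow> 'v) \<Rightarrow> ('e \<Rightarrow> 'v) \<Rightarrow> ('k::field \<Rightarrow> 'k) \<Rightarrow> ('r::ring \<Rightarrow> 'r) \<Rightarrow> ((('v, 'e) gen list \<Rightarrow> 'k) \<Rightarrow> 'r) \<Rightarrow> bool" where
  "faithful s r ks rs t \<longleftrightarrow> (\<forall>x\<in>Fset. lpa_positive s r ks x \<longrightarrow> positive rs (t x))"

end

theory Submission
  imports Defs
begin

lemma fmul_Nil: "fmul f g [] = f [] * g []"
  by (simp add: fmul_def)

lemma fmul_Cons: "fmul f g (x # w) = f [] * g (x # w) + fmul (\<lambda>u. f (x # u)) g w"
  unfolding fmul_def
  by (simp add: sum.atLeast0_atMost_Suc_shift del: sum.cl_ivl_Suc)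

lemma fmul_lin1: "fmul (\<lambda>u. a * f u + g u) h w = a * fmul f h w + fmul g h w"
  by (simp add: fmul_def algebra_simps sum.distrib sum_distrib_left)

lemma fmul_assoc: "fmul (fmul f g) h = fmul f (fmul g h)"
proof
  fix w show "fmul (fmul f g) h w = fmul f (fmul g h) w"
  proof (induction w arbitrary: f)
    case Nil then show ?case by (simp add: fmul_Nil)
  next
    case (Cons x w)
    have e: "(\<lambda>u. fmul f g (x # u)) = (\<lambda>u. f [] * g (x # u) + fmul (\<lambda>u. f (x # u)) g u)"
      by (simp add: fmul_Cons)
    show ?case
      apply (simp add: fmul_Cons fmul_Nil e fmul_lin1 Cons.IH)
      by (simp add: algebra_simps)
  qed
qed

lemma fmul_add_left: "fmul (fadd f g) h = fadd (fmul f h) (fmul g h)"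
  by (auto simp: fmul_def fadd_def algebra_simps sum.distrib)
lemma fmul_add_right: "fmul h (fadd f g) = fadd (fmul h f) (fmul h g)"
  by (auto simp: fmul_def fadd_def algebra_simps sum.distrib)
lemma fmul_sub_left: "fmul (fsub f g) h = fsub (fmul f h) (fmul g h)"
  by (auto simp: fmul_def fsub_def algebra_simps sum_subtractf)
lemma fmul_sub_right: "fmul h (fsub f g) = fsub (fmul h f) (fmul h g)"
  by (auto simp: fmul_def fsub_def algebra_simps sum_subtractf)
lemma fmul_scal_left: "fmul (fscal a f) h = fscal a (fmul f h)"
  by (auto simp: fmul_def fscal_def algebra_simps sum_distrib_left)
lemma fmul_scal_right: "fmul h (fscal a f) = fscal a (fmul h f)"
  by (auto simp: fmul_def fscal_def algebra_simps sum_distrib_left)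
lemma fmul_zero_left[simp]: "fmul fzero h = fzero"
  by (auto simp: fmul_def fzero_def)
lemma fmul_zero_right[simp]: "fmul h fzero = fzero"
  by (auto simp: fmul_def fzero_def)
lemma fmul_sum_left: "fmul (fsum g A) h = fsum (\<lambda>a. fmul (g a) h) A"
  by (auto simp: fmul_def fsum_def sum_distrib_right intro!: sum.swap)
lemma fmul_sum_right: "fmul h (fsum g A) = fsum (\<lambda>a. fmul h (g a)) A"
  by (auto simp: fmul_def fsum_def sum_distrib_left intro!: sum.swap)

lemma fmul_mon_left: "fmul (mon u) h w = (if take (length u) w = u then h (drop (length u) w) else 0)"
proof -
  have "fmul (mon u) h w = (\<Sum>i\<in>{0..length w}. if i = length u \<and> take (length u) w = u then h (drop (length u) w) else 0)"
    unfolding fmul_def mon_def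
    by (rule sum.cong) (auto simp: min_def split: if_splits)
  also have "\<dots> = (if take (length u) w = u then h (drop (length u) w) else 0)"
  proof (cases "take (length u) w = u")
    case True
    then have "length u \<le> length w" by (metis length_take min.absorb_iff2 min.cobounded2)
    with True show ?thesis by (simp add: sum.delta)
  qed simp
  finally show ?thesis .
qed


lemma fmul_mon_right: "fmul h (mon u) w = (\<Sum>i\<in>{0..length w}. if drop i w = u then h (take i w) else 0)"
  unfolding fmul_def mon_def by (rule sum.cong) auto

lemma fmul_mon_mon: "fmul (mon u) (mon v) = mon (u @ v)"
proof
  fix w show "fmul (mon u) (mon v) w = mon (u @ v) w"
    unfolding fmul_mon_left by (auto simp: mon_def) (metis append_take_drop_id)
qed

lemma mon_neq_Nil: "w \<noteq> [] \<Longrightarrow> mon w [] = 0"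
  by (auto simp: mon_def)

lemma Fset_mon: "w \<noteq> [] \<Longrightarrow> mon w \<in> Fset"
  by (auto simp: Fset_def mon_def)

lemma Fset_zero[simp]: "fzero \<in> Fset"
  by (auto simp: Fset_def fzero_def)

lemma supp_fadd: "{w. fadd f g w \<noteq> 0} \<subseteq> {w. f w \<noteq> 0} \<union> {w. g w \<noteq> 0}"
  by (auto simp: fadd_def)

lemma Fset_add: "f \<in> Fset \<Longrightarrow> g \<in> Fset \<Longrightarrow> fadd f g \<in> Fset"
  unfolding Fset_def by (auto intro: finite_subset[of _ "{w. f w \<noteq> 0} \<union> {w. g w \<noteq> 0}"] simp: fadd_def)
lemma Fset_sub: "f \<in> Fset \<Longrightarrow> g \<in> Fset \<Longrightarrow> fsub f g \<in> Fset"
  unfolding Fset_def by (auto intro: finite_subset[of _ "{w. f w \<noteq> 0} \<union> {w. g w \<noteq> 0}"] simp: fsub_def)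
lemma Fset_scal: "f \<in> Fset \<Longrightarrow> fscal a f \<in> Fset"
  unfolding Fset_def by (auto intro: finite_subset[of _ "{w. f w \<noteq> 0}"] simp: fscal_def)

lemma Fset_sum: "finite A \<Longrightarrow> (\<And>a. a \<in> A \<Longrightarrow> g a \<in> Fset) \<Longrightarrow> fsum g A \<in> Fset"
proof (induction A rule: finite_induct)
  case empty then show ?case by (simp add: fsum_def fzero_def[symmetric])
next
  case (insert x F)
  have "fsum g (insert x F) = fadd (g x) (fsum g F)"
    using insert by (auto simp: fsum_def fadd_def)
  then show ?case using insert by (auto intro: Fset_add)
qed

lemma fsum_insert: "finite F \<Longrightarrow> x \<notin> F \<Longrightarrow> fsum g (insert x F) = fadd (g x) (fsum g F)"
  by (auto simp: fsum_def fadd_def)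
lemma fsum_empty[simp]: "fsum g {} = fzero"
  by (auto simp: fsum_def fzero_def)

lemma Fset_mul: assumes "f \<in> Fset" "g \<in> Fset" shows "fmul f g \<in> Fset"
proof -
  let ?A = "{w. f w \<noteq> 0}" and ?B = "{w. g w \<noteq> 0}"
  have "{w. fmul f g w \<noteq> 0} \<subseteq> (\<lambda>(u,v). u @ v) ` (?A \<times> ?B)"
  proof
    fix w assume "w \<in> {w. fmul f g w \<noteq> 0}"
    then obtain i where "f (take i w) * g (drop i w) \<noteq> 0"
      unfolding fmul_def by (auto elim: sum.not_neutral_contains_not_neutral)
    then show "w \<in> (\<lambda>(u,v). u @ v) ` (?A \<times> ?B)"
      by (auto intro!: image_eqI[of _ _ "(take i w, drop i w)"])
  qed
  moreover have "finite ((\<lambda>(u,v). u @ v) ` (?A \<times> ?B))" using assms by (auto simp: Fset_def)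
  ultimately show ?thesis using assms by (auto simp: Fset_def fmul_Nil intro: finite_subset)
qed

lemma gswap_gswap[simp]: "gswap (gswap g) = g" by (cases g) auto
lemma wstar_wstar[simp]: "wstar (wstar w) = w"
  by (simp add: wstar_def rev_map comp_def)
lemma wstar_append: "wstar (u @ v) = wstar v @ wstar u"
  by (simp add: wstar_def)
lemma wstar_Nil[simp]: "wstar [] = []" by (simp add: wstar_def)
lemma wstar_eq_Nil[simp]: "wstar w = [] \<longleftrightarrow> w = []" by (simp add: wstar_def)
lemma length_wstar[simp]: "length (wstar w) = length w" by (simp add: wstar_def)
lemma inj_wstar: "inj wstar" by (metis injI wstar_wstar)


locale finv = fixes ks :: "'k::field \<Rightarrow> 'k" assumes fi: "field_involution ks"
begin
lemma ks_add: "ks (a + b) = ks a + ks b" using fi by (simp add: field_involution_def)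
lemma ks_mult: "ks (a * b) = ks a * ks b" using fi by (simp add: field_involution_def mult.commute)
lemma ks_ks[simp]: "ks (ks a) = a" using fi by (simp add: field_involution_def)
lemma ks_0[simp]: "ks 0 = 0" using ks_add[of 0 0] by (metis add.right_neutral add_left_cancel)
lemma ks_neg: "ks (- a) = - ks a" using ks_add[of a "-a"] by (simp add: eq_neg_iff_add_eq_0 add.commute)
lemma ks_diff: "ks (a - b) = ks a - ks b" using ks_add[of a "-b"] by (simp add: ks_neg)
lemma ks_eq0[simp]: "ks a = 0 \<longleftrightarrow> a = 0" by (metis ks_0 ks_ks)
lemma ks_1[simp]: "ks 1 = 1"
proof -
  have "ks 1 = ks 1 * ks 1" using ks_mult[of 1 1] by simp
  moreover have "ks 1 \<noteq> 0" by simp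
  ultimately show ?thesis by (metis mult_cancel_right1)
qed
lemma ks_sum: "ks (sum f A) = sum (\<lambda>a. ks (f a)) A"
  by (induction A rule: infinite_finite_induct) (auto simp: ks_add)

lemma fstar_mon[simp]: "fstar ks (mon w) = mon (wstar w)"
  by (rule ext) (auto simp: fstar_def mon_def)
lemma fstar_fstar[simp]: "fstar ks (fstar ks f) = f"
  by (rule ext) (simp add: fstar_def)
lemma fstar_add: "fstar ks (fadd f g) = fadd (fstar ks f) (fstar ks g)"
  by (rule ext) (simp add: fstar_def fadd_def ks_add)
lemma fstar_sub: "fstar ks (fsub f g) = fsub (fstar ks f) (fstar ks g)"
  by (rule ext) (simp add: fstar_def fsub_def ks_diff)
lemma fstar_scal: "fstar ks (fscal a f) = fscal (ks a) (fstar ks f)"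
  by (rule ext) (simp add: fstar_def fscal_def ks_mult)
lemma fstar_zero[simp]: "fstar ks fzero = fzero"
  by (rule ext) (simp add: fstar_def fzero_def)
lemma fstar_sum: "fstar ks (fsum g A) = fsum (\<lambda>a. fstar ks (g a)) A"
  by (rule ext) (simp add: fstar_def fsum_def ks_sum)

lemma rev_take': "rev (take j xs) = drop (length xs - j) (rev xs)"
  by (simp add: rev_take)
lemma rev_drop': "rev (drop j xs) = take (length xs - j) (rev xs)"
  by (simp add: rev_drop)

lemma fstar_mul: "fstar ks (fmul f g) = fmul (fstar ks g) (fstar ks f)"
proof
  fix w :: "('a,'b) gen list"
  let ?n = "length w"
  have "fstar ks (fmul f g) w = (\<Sum>i\<in>{0..?n}. ks (g (drop i (wstar w))) * ks (f (take i (wstar w))))"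
    by (simp add: fstar_def fmul_def ks_sum ks_mult mult.commute)
  also have "\<dots> = (\<Sum>j\<in>{0..?n}. ks (g (drop (?n - j) (wstar w))) * ks (f (take (?n - j) (wstar w))))"
    by (rule sum.reindex_bij_witness[of _ "\<lambda>j. ?n - j" "\<lambda>j. ?n - j"]) auto
  also have "\<dots> = fmul (fstar ks g) (fstar ks f) w"
    unfolding fmul_def fstar_def
  proof (rule sum.cong)
    fix j assume j: "j \<in> {0..?n}"
    have "wstar (take j w) = drop (?n - j) (wstar w)"
      by (simp add: wstar_def rev_take' flip: take_map)
    moreover have "wstar (drop j w) = take (?n - j) (wstar w)"
      by (simp add: wstar_def rev_drop' flip: drop_map)
    ultimately show "ks (g (drop (?n - j) (wstar w))) * ks (f (take (?n - j) (wstar w))) =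
        ks (g (wstar (take j w))) * ks (f (wstar (drop j w)))" by simp
  qed simp
  finally show "fstar ks (fmul f g) w = fmul (fstar ks g) (fstar ks f) w" .
qed

lemma Fset_star: "f \<in> Fset \<Longrightarrow> fstar ks f \<in> Fset"
proof -
  assume f: "f \<in> Fset"
  have "{w. fstar ks f w \<noteq> 0} = wstar ` {w. f w \<noteq> 0}"
    by (auto simp: fstar_def image_iff intro!: exI[of _ "wstar _"])
  then show ?thesis using f by (auto simp: Fset_def fstar_def)
qed
end

lemma rels_Fset: "x \<in> lpa_rels s r \<Longrightarrow> x \<in> Fset"
  unfolding lpa_rels_def
  by (auto intro!: Fset_sub Fset_mon Fset_sum simp: regular_def)

lemma ideal_Fset: "x \<in> lpa_ideal s r \<Longrightarrow> x \<in> Fset"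
  by (induction rule: lpa_ideal.induct)
     (auto intro: rels_Fset Fset_add Fset_scal Fset_mul)

lemma fsub_as_add: "fsub x y = fadd x (fscal (-1) y)"
  by (rule ext) (simp add: fsub_def fadd_def fscal_def)

lemma I_sub: "x \<in> lpa_ideal s r \<Longrightarrow> y \<in> lpa_ideal s r \<Longrightarrow> fsub x y \<in> lpa_ideal s r"
  unfolding fsub_as_add by (intro lpa_ideal.add lpa_ideal.scal)

lemma I_sum: "(\<And>a. a \<in> A \<Longrightarrow> g a \<in> lpa_ideal s r) \<Longrightarrow> fsum g A \<in> lpa_ideal s r"
proof (induction A rule: infinite_finite_induct)
  case (infinite A)
  then have "fsum g A = fzero" by (rule_tac ext) (simp add: fsum_def fzero_def)
  then show ?case by (simp add: lpa_ideal.zero)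
next
  case empty then show ?case by (simp add: lpa_ideal.zero)
next
  case (insert x F) then show ?case by (simp add: fsum_insert lpa_ideal.add)
qed

lemma fmul_mon_Nil_left[simp]: "fmul (mon []) x = x"
  by (rule ext) (simp add: fmul_mon_left)
lemma fmul_mon_Nil_right[simp]: "fmul x (mon []) = x"
proof
  fix w
  have "fmul x (mon []) w = (\<Sum>i\<in>{0..length w}. if i = length w then x (take i w) else 0)"
    unfolding fmul_def mon_def by (rule sum.cong) auto
  then show "fmul x (mon []) w = x w" by simp
qed

lemma I_mon_left: "x \<in> lpa_ideal s r \<Longrightarrow> fmul (mon a) x \<in> lpa_ideal s r"
  by (cases "a = []") (auto intro: lpa_ideal.mult_left Fset_mon)
lemma I_mon_right: "x \<in> lpa_ideal s r \<Longrightarrow> fmul x (mon a) \<in> lpa_ideal s r"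
  by (cases "a = []") (auto intro: lpa_ideal.mult_right Fset_mon)

definition eqv :: "('e \<Rightarrow> 'v) \<Rightarrow> ('e \<Rightarrow> 'v) \<Rightarrow> (('v, 'e) gen list \<Rightarrow> 'k::field) \<Rightarrow> (('v, 'e) gen list \<Rightarrow> 'k) \<Rightarrow> bool" where
  "eqv s r x y \<longleftrightarrow> fsub x y \<in> lpa_ideal s r"

lemma fsub_self: "fsub x x = fzero" by (rule ext) (simp add: fsub_def fzero_def)

lemma eqv_refl[simp]: "eqv s r x x"
  by (simp add: eqv_def fsub_self lpa_ideal.zero)
lemma eqv_sym: "eqv s r x y \<Longrightarrow> eqv s r y x"
proof -
  assume "eqv s r x y"
  then have "fscal (-1) (fsub x y) \<in> lpa_ideal s r" by (simp add: eqv_def lpa_ideal.scal)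
  moreover have "fscal (-1) (fsub x y) = fsub y x" by (rule ext) (simp add: fscal_def fsub_def)
  ultimately show ?thesis by (simp add: eqv_def)
qed
lemma eqv_trans[trans]: "eqv s r x y \<Longrightarrow> eqv s r y z \<Longrightarrow> eqv s r x z"
proof -
  assume "eqv s r x y" "eqv s r y z"
  then have "fadd (fsub x y) (fsub y z) \<in> lpa_ideal s r" by (simp add: eqv_def lpa_ideal.add)
  moreover have "fadd (fsub x y) (fsub y z) = fsub x z" by (rule ext) (simp add: fadd_def fsub_def)
  ultimately show ?thesis by (simp add: eqv_def)
qed
lemma eqv_add: "eqv s r x y \<Longrightarrow> eqv s r x' y' \<Longrightarrow> eqv s r (fadd x x') (fadd y y')"
proof -
  assume "eqv s r x y" "eqv s r x' y'"
  then have "fadd (fsub x y) (fsub x' y') \<in> lpa_ideal s r" by (simp add: eqv_def lpa_ideal.add)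
  moreover have "fadd (fsub x y) (fsub x' y') = fsub (fadd x x') (fadd y y')" by (rule ext) (simp add: fadd_def fsub_def)
  ultimately show ?thesis by (simp add: eqv_def)
qed
lemma eqv_sub: "eqv s r x y \<Longrightarrow> eqv s r x' y' \<Longrightarrow> eqv s r (fsub x x') (fsub y y')"
proof -
  assume "eqv s r x y" "eqv s r x' y'"
  then have "fsub (fsub x y) (fsub x' y') \<in> lpa_ideal s r" by (simp add: eqv_def I_sub)
  moreover have "fsub (fsub x y) (fsub x' y') = fsub (fsub x x') (fsub y y')" by (rule ext) (simp add: fsub_def)
  ultimately show ?thesis by (simp add: eqv_def)
qed
lemma eqv_scal: "eqv s r x y \<Longrightarrow> eqv s r (fscal a x) (fscal a y)"
proof -
  assume "eqv s r x y"
  then have "fscal a (fsub x y) \<in> lpa_ideal s r" by (simp add: eqv_def lpa_ideal.scal)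
  moreover have "fscal a (fsub x y) = fsub (fscal a x) (fscal a y)" by (rule ext) (simp add: fscal_def fsub_def algebra_simps)
  ultimately show ?thesis by (simp add: eqv_def)
qed
lemma eqv_sum: "(\<And>a. a \<in> A \<Longrightarrow> eqv s r (g a) (h a)) \<Longrightarrow> eqv s r (fsum g A) (fsum h A)"
proof -
  assume "\<And>a. a \<in> A \<Longrightarrow> eqv s r (g a) (h a)"
  then have "fsum (\<lambda>a. fsub (g a) (h a)) A \<in> lpa_ideal s r" by (simp add: eqv_def I_sum)
  moreover have "fsum (\<lambda>a. fsub (g a) (h a)) A = fsub (fsum g A) (fsum h A)"
    by (rule ext) (simp add: fsum_def fsub_def sum_subtractf)
  ultimately show ?thesis by (simp add: eqv_def)
qed
lemma eqv_mul_left: "eqv s r x y \<Longrightarrow> f \<in> Fset \<Longrightarrow> eqv s r (fmul f x) (fmul f y)"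
  by (simp add: eqv_def lpa_ideal.mult_left flip: fmul_sub_right)
lemma eqv_mul_right: "eqv s r x y \<Longrightarrow> f \<in> Fset \<Longrightarrow> eqv s r (fmul x f) (fmul y f)"
  by (simp add: eqv_def lpa_ideal.mult_right flip: fmul_sub_left)
lemma eqv_mon_left: "eqv s r x y \<Longrightarrow> eqv s r (fmul (mon a) x) (fmul (mon a) y)"
  by (simp add: eqv_def I_mon_left flip: fmul_sub_right)
lemma eqv_mon_right: "eqv s r x y \<Longrightarrow> eqv s r (fmul x (mon a)) (fmul y (mon a))"
  by (simp add: eqv_def I_mon_right flip: fmul_sub_left)
lemma eqv_mul: "eqv s r x y \<Longrightarrow> eqv s r x' y' \<Longrightarrow> x \<in> Fset \<Longrightarrow> y' \<in> Fset \<Longrightarrow> eqv s r (fmul x x') (fmul y y')"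
  by (meson eqv_mul_left eqv_mul_right eqv_trans)

lemma eqv_zero_iff: "eqv s r x fzero \<longleftrightarrow> x \<in> lpa_ideal s r"
proof -
  have "fsub x fzero = x" by (rule ext) (simp add: fsub_def fzero_def)
  then show ?thesis by (simp add: eqv_def)
qed

lemma relV: "fsub (mon [V v, V w]) (if v = w then mon [V v] else fzero) \<in> lpa_rels s r"
  unfolding lpa_rels_def by blast
lemma relE1: "fsub (mon [V (s e), Ed e]) (mon [Ed e]) \<in> lpa_rels s r"
  unfolding lpa_rels_def by blast
lemma relE1': "fsub (mon [Ed e, V (r e)]) (mon [Ed e]) \<in> lpa_rels s r"
  unfolding lpa_rels_def by blast
lemma relE2: "fsub (mon [V (r e), Gh e]) (mon [Gh e]) \<in> lpa_rels s r"
  unfolding lpa_rels_def by blast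
lemma relE2': "fsub (mon [Gh e, V (s e)]) (mon [Gh e]) \<in> lpa_rels s r"
  unfolding lpa_rels_def by blast
lemma relCK1: "fsub (mon [Gh e, Ed f]) (if e = f then mon [V (r e)] else fzero) \<in> lpa_rels s r"
  unfolding lpa_rels_def by blast
lemma relCK2: "regular s v \<Longrightarrow> fsub (mon [V v]) (fsum (\<lambda>e. mon [Ed e, Gh e]) {e. s e = v}) \<in> lpa_rels s r"
  unfolding lpa_rels_def by blast

lemma rel_eqv: "fsub x y \<in> lpa_rels s r \<Longrightarrow> eqv s r x y"
  by (simp add: eqv_def lpa_ideal.rel)

context finv begin

lemma rels_star: "x \<in> lpa_rels s r \<Longrightarrow> fstar ks x \<in> lpa_ideal s r"
proof -
  assume "x \<in> lpa_rels s r"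
  then consider (V) v w where "x = fsub (mon [V v, V w]) (if v = w then mon [V v] else fzero)"
    | (E1) e where "x = fsub (mon [V (s e), Ed e]) (mon [Ed e])"
    | (E1') e where "x = fsub (mon [Ed e, V (r e)]) (mon [Ed e])"
    | (E2) e where "x = fsub (mon [V (r e), Gh e]) (mon [Gh e])"
    | (E2') e where "x = fsub (mon [Gh e, V (s e)]) (mon [Gh e])"
    | (CK1) e f where "x = fsub (mon [Gh e, Ed f]) (if e = f then mon [V (r e)] else fzero)"
    | (CK2) v where "x = fsub (mon [V v]) (fsum (\<lambda>e. mon [Ed e, Gh e]) {e. s e = v})" "regular s v"
    unfolding lpa_rels_def by blast
  then show ?thesis
  proof cases
    case (V v w)
    have "fstar ks x = fsub (mon [V w, V v]) (if w = v then mon [V w] else fzero)"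
      by (auto simp: V fstar_sub wstar_def)
    then show ?thesis by (metis lpa_ideal.rel relV)
  next
    case (E1 e)
    have "fstar ks x = fsub (mon [Gh e, V (s e)]) (mon [Gh e])"
      by (auto simp: E1 fstar_sub wstar_def)
    then show ?thesis by (auto intro!: lpa_ideal.rel relV relE1 relE1' relE2 relE2' relCK1)
  next
    case (E1' e)
    have "fstar ks x = fsub (mon [V (r e), Gh e]) (mon [Gh e])"
      by (auto simp: E1' fstar_sub wstar_def)
    then show ?thesis by (auto intro!: lpa_ideal.rel relV relE1 relE1' relE2 relE2' relCK1)
  next
    case (E2 e)
    have "fstar ks x = fsub (mon [Ed e, V (r e)]) (mon [Ed e])"
      by (auto simp: E2 fstar_sub wstar_def)
    then show ?thesis by (auto intro!: lpa_ideal.rel relV relE1 relE1' relE2 relE2' relCK1)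
  next
    case (E2' e)
    have "fstar ks x = fsub (mon [V (s e), Ed e]) (mon [Ed e])"
      by (auto simp: E2' fstar_sub wstar_def)
    then show ?thesis by (auto intro!: lpa_ideal.rel relV relE1 relE1' relE2 relE2' relCK1)
  next
    case (CK1 e f)
    have "fstar ks x = fsub (mon [Gh f, Ed e]) (if f = e then mon [V (r f)] else fzero)"
      by (auto simp: CK1 fstar_sub wstar_def)
    then show ?thesis by (metis lpa_ideal.rel relCK1)
  next
    case (CK2 v)
    have "fstar ks x = x"
      by (auto simp: CK2 fstar_sub fstar_sum wstar_def)
    then show ?thesis using CK2 by (auto intro!: lpa_ideal.rel relCK2)
  qed
qed

lemma ideal_star: "x \<in> lpa_ideal s r \<Longrightarrow> fstar ks x \<in> lpa_ideal s r"
proof (induction rule: lpa_ideal.induct)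
  case (rel x) then show ?case by (rule rels_star)
next
  case zero then show ?case by (simp add: lpa_ideal.zero)
next
  case (add x y) then show ?case by (simp add: fstar_add lpa_ideal.add)
next
  case (scal x a) then show ?case by (simp add: fstar_scal lpa_ideal.scal)
next
  case (mult_left x f) then show ?case by (simp add: fstar_mul lpa_ideal.mult_right Fset_star)
next
  case (mult_right x f) then show ?case by (simp add: fstar_mul lpa_ideal.mult_left Fset_star)
qed

lemma eqv_star: "eqv s r x y \<Longrightarrow> eqv s r (fstar ks x) (fstar ks y)"
  by (simp add: eqv_def ideal_star flip: fstar_sub)

end


section \<open>Word calculus\<close>

definition weq :: "('e \<Rightarrow> 'v) \<Rightarrow> ('e \<Rightarrow> 'v) \<Rightarrow> ('v, 'e) gen list \<Rightarrow> ('v, 'e) gen list \<Rightarrow> 'k::field itself \<Rightarrow> bool" where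
  "weq s r u v (_::'k itself) \<longleftrightarrow> eqv s r (mon u :: _ \<Rightarrow> 'k) (mon v)"

definition wz :: "('e \<Rightarrow> 'v) \<Rightarrow> ('e \<Rightarrow> 'v) \<Rightarrow> ('v, 'e) gen list \<Rightarrow> 'k::field itself \<Rightarrow> bool" where
  "wz s r u (_::'k itself) \<longleftrightarrow> (mon u :: _ \<Rightarrow> 'k) \<in> lpa_ideal s r"

lemma mon_ctx: "mon (a @ u @ b) = fmul (mon a) (fmul (mon u) (mon b))"
  by (simp add: fmul_mon_mon)

lemma weq_ctx: "weq s r u v K \<Longrightarrow> weq s r (a @ u @ b) (a @ v @ b) K"
  unfolding weq_def mon_ctx by (intro eqv_mon_left eqv_mon_right)

lemma wz_ctx: "wz s r u K \<Longrightarrow> wz s r (a @ u @ b) K"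
  unfolding wz_def mon_ctx by (intro I_mon_left I_mon_right)

lemma weq_refl[simp]: "weq s r u u K" by (simp add: weq_def)
lemma weq_sym: "weq s r u v K \<Longrightarrow> weq s r v u K" by (simp add: weq_def eqv_sym)
lemma weq_trans[trans]: "weq s r u v K \<Longrightarrow> weq s r v w K \<Longrightarrow> weq s r u w K"
  unfolding weq_def by (rule eqv_trans)
lemma weq_wz: "weq s r u v K \<Longrightarrow> wz s r v K \<Longrightarrow> wz s r u K"
  unfolding weq_def wz_def
  by (meson eqv_trans eqv_zero_iff)

lemma wVV: "weq s r [V a, V a] [V a] K"
  unfolding weq_def using rel_eqv[OF relV[of a a]] by simp
lemma zVV: "a \<noteq> b \<Longrightarrow> wz s r [V a, V b] K"
  unfolding wz_def using rel_eqv[OF relV[of a b]] by (simp add: eqv_zero_iff)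
lemma wE1: "weq s r [V (s e), Ed e] [Ed e] K"
  unfolding weq_def by (rule rel_eqv[OF relE1])
lemma wE1': "weq s r [Ed e, V (r e)] [Ed e] K"
  unfolding weq_def by (rule rel_eqv[OF relE1'])
lemma wE2: "weq s r [V (r e), Gh e] [Gh e] K"
  unfolding weq_def by (rule rel_eqv[OF relE2])
lemma wE2': "weq s r [Gh e, V (s e)] [Gh e] K"
  unfolding weq_def by (rule rel_eqv[OF relE2'])
lemma wCK1: "weq s r [Gh e, Ed e] [V (r e)] K"
  unfolding weq_def using rel_eqv[OF relCK1[of e e]] by simp
lemma zCK1: "e \<noteq> f \<Longrightarrow> wz s r [Gh e, Ed f] K"
  unfolding wz_def using rel_eqv[OF relCK1[of e f]] by (simp add: eqv_zero_iff)

lemma zEV: "a \<noteq> r e \<Longrightarrow> wz s r [Ed e, V a] K"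
proof -
  assume a: "a \<noteq> r e"
  have "weq s r [Ed e, V a] ([Ed e, V (r e)] @ [V a]) K"
    using weq_ctx[OF weq_sym[OF wE1'[of s r e]], of "[]" "[V a]"] by simp
  moreover have "wz s r ([Ed e] @ [V (r e), V a] @ []) K"
    using a by (intro wz_ctx zVV) auto
  ultimately show ?thesis by (auto intro: weq_wz)
qed

lemma zVE: "a \<noteq> s e \<Longrightarrow> wz s r [V a, Ed e] K"
proof -
  assume a: "a \<noteq> s e"
  have "weq s r [V a, Ed e] ([V a] @ [V (s e), Ed e]) K"
    using weq_ctx[OF weq_sym[OF wE1[of s r e]], of "[V a]" "[]"] by simp
  moreover have "wz s r ([] @ [V a, V (s e)] @ [Ed e]) K"
    using a by (intro wz_ctx zVV) auto
  ultimately show ?thesis by (auto intro: weq_wz)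
qed

lemma zGV: "a \<noteq> s e \<Longrightarrow> wz s r [Gh e, V a] K"
proof -
  assume a: "a \<noteq> s e"
  have "weq s r [Gh e, V a] ([Gh e, V (s e)] @ [V a]) K"
    using weq_ctx[OF weq_sym[OF wE2'[of s r e]], of "[]" "[V a]"] by simp
  moreover have "wz s r ([Gh e] @ [V (s e), V a] @ []) K"
    using a by (intro wz_ctx zVV) auto
  ultimately show ?thesis by (auto intro: weq_wz)
qed

lemma zVG: "a \<noteq> r e \<Longrightarrow> wz s r [V a, Gh e] K"
proof -
  assume a: "a \<noteq> r e"
  have "weq s r [V a, Gh e] ([V a] @ [V (r e), Gh e]) K"
    using weq_ctx[OF weq_sym[OF wE2[of s r e]], of "[V a]" "[]"] by simp
  moreover have "wz s r ([] @ [V a, V (r e)] @ [Gh e]) K"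
    using a by (intro wz_ctx zVV) auto
  ultimately show ?thesis by (auto intro: weq_wz)
qed

fun vp :: "('e \<Rightarrow> 'v) \<Rightarrow> ('e \<Rightarrow> 'v) \<Rightarrow> 'v \<Rightarrow> 'e list \<Rightarrow> bool" where
  "vp s r v [] = True"
| "vp s r v (e # es) \<longleftrightarrow> s e = v \<and> vp s r (r e) es"

fun endv :: "('e \<Rightarrow> 'v) \<Rightarrow> 'v \<Rightarrow> 'e list \<Rightarrow> 'v" where
  "endv r v [] = v"
| "endv r v (e # es) = endv r (r e) es"

definition pth :: "'v \<Rightarrow> 'e list \<Rightarrow> ('v, 'e) gen list" where
  "pth v es = V v # map Ed es"

definition Mw :: "'v \<Rightarrow> 'e list \<Rightarrow> 'v \<Rightarrow> 'e list \<Rightarrow> ('v, 'e) gen list" where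
  "Mw a es u fs = pth a es @ wstar (pth u fs)"

lemma wstar_pth: "wstar (pth u fs) = rev (map Gh fs) @ [V u]"
  unfolding wstar_def pth_def by (simp add: map_map comp_def)

lemma Mw_eq: "Mw a es u fs = V a # map Ed es @ rev (map Gh fs) @ [V u]"
  unfolding Mw_def wstar_pth by (simp add: pth_def)

lemma vp_append: "vp s r v (es @ fs) \<longleftrightarrow> vp s r v es \<and> vp s r (endv r v es) fs"
  by (induction es arbitrary: v) auto

lemma endv_append: "endv r v (es @ fs) = endv r (endv r v es) fs"
  by (induction es arbitrary: v) simp_all

lemma endv_last: "es \<noteq> [] \<Longrightarrow> endv r v es = r (last es)"
  by (induction es arbitrary: v) auto

lemma vp_hd: "vp s r v (e # es) \<Longrightarrow> s e = v" by simp

lemma pth_end: "vp s r a es \<Longrightarrow> weq s r (pth a es @ [V (endv r a es)]) (pth a es) K"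
proof (cases es rule: rev_cases)
  case Nil then show ?thesis by (simp add: pth_def wVV)
next
  case (snoc es' e)
  then have "pth a es @ [V (endv r a es)] = (V a # map Ed es') @ [Ed e, V (r e)] @ []"
    by (simp add: pth_def endv_last)
  moreover have "pth a es = (V a # map Ed es') @ [Ed e] @ []" using snoc by (simp add: pth_def)
  ultimately show ?thesis by (metis weq_ctx wE1')
qed

section \<open>Normal form\<close>

definition nfok :: "('e \<Rightarrow> 'v) \<Rightarrow> ('e \<Rightarrow> 'v) \<Rightarrow> 'v \<Rightarrow> 'e list \<Rightarrow> 'v \<Rightarrow> 'e list \<Rightarrow> bool" where
  "nfok s r a es u fs \<longleftrightarrow> vp s r a es \<and> vp s r u fs \<and> endv r a es = endv r u fs"


lemma nf_step:
  assumes ok: "nfok s r a es u fs"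
  shows "wz s r (g # Mw a es u fs) K \<or> (\<exists>a' es' u' fs'. nfok s r a' es' u' fs' \<and> weq s r (g # Mw a es u fs) (Mw a' es' u' fs') K)"
proof (cases g)
  case (V b)
  show ?thesis
  proof (cases "b = a")
    case True
    then have "weq s r ([] @ [V b, V a] @ (map Ed es @ rev (map Gh fs) @ [V u])) ([] @ [V a] @ (map Ed es @ rev (map Gh fs) @ [V u])) K"
      by (intro weq_ctx) (simp add: wVV)
    then have "weq s r (g # Mw a es u fs) (Mw a es u fs) K" using V by (simp add: Mw_eq)
    then show ?thesis using ok by blast
  next
    case False
    then have "wz s r ([] @ [V b, V a] @ (map Ed es @ rev (map Gh fs) @ [V u])) K"
      by (intro wz_ctx zVV)
    then show ?thesis using V by (auto simp: Mw_eq)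
  qed
next
  case (Ed e)
  show ?thesis
  proof (cases "a = r e")
    case True
    let ?t = "map Ed es @ rev (map Gh fs) @ [V u]"
    have "weq s r ([] @ [Ed e, V a] @ ?t) ([] @ [Ed e] @ ?t) K"
      using True by (intro weq_ctx) (simp add: wE1')
    also have "weq s r ([] @ [Ed e] @ ?t) ([] @ [V (s e), Ed e] @ ?t) K"
      by (rule weq_ctx, rule weq_sym, rule wE1)
    finally have "weq s r (g # Mw a es u fs) (Mw (s e) (e # es) u fs) K"
      using Ed by (simp add: Mw_eq)
    moreover have "nfok s r (s e) (e # es) u fs" using ok True by (simp add: nfok_def)
    ultimately show ?thesis by blast
  next
    case False
    then have "wz s r ([] @ [Ed e, V a] @ (map Ed es @ rev (map Gh fs) @ [V u])) K"
      by (intro wz_ctx zEV)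
    then show ?thesis using Ed by (auto simp: Mw_eq)
  qed
next
  case (Gh e)
  show ?thesis
  proof (cases es)
    case (Cons e' es'')
    from ok Cons have a: "a = s e'" and vp'': "vp s r (r e') es''" by (auto simp: nfok_def)
    let ?t = "map Ed es'' @ rev (map Gh fs) @ [V u]"
    have 1: "weq s r ([Gh e] @ [V a, Ed e'] @ ?t) ([Gh e] @ [Ed e'] @ ?t) K"
      using a by (intro weq_ctx) (simp add: wE1)
    show ?thesis
    proof (cases "e = e'")
      case True
      have "weq s r ([] @ [Gh e, Ed e'] @ ?t) ([] @ [V (r e)] @ ?t) K"
        using True by (intro weq_ctx) (simp add: wCK1)
      from weq_trans[OF 1[simplified] this[simplified]] have "weq s r (g # Mw a es u fs) (Mw (r e) es'' u fs) K"
        using Gh Cons by (simp add: Mw_eq)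
      moreover have "nfok s r (r e) es'' u fs" using ok Cons True by (simp add: nfok_def)
      ultimately show ?thesis by blast
    next
      case False
      have "wz s r ([] @ [Gh e, Ed e'] @ ?t) K" using False by (intro wz_ctx zCK1)
      from weq_wz[OF 1[simplified] this[simplified]] have "wz s r (g # Mw a es u fs) K"
        using Gh Cons by (simp add: Mw_eq)
      then show ?thesis by blast
    qed
  next
    case Nil
    let ?t = "rev (map Gh fs) @ [V u]"
    show ?thesis
    proof (cases "a = s e")
      case True
      have "weq s r ([] @ [Gh e, V a] @ ?t) ([] @ [Gh e] @ ?t) K"
        using True by (intro weq_ctx) (simp add: wE2')
      also have "weq s r ([] @ [Gh e] @ ?t) ([] @ [V (r e), Gh e] @ ?t) K"
        by (rule weq_ctx, rule weq_sym, rule wE2)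
      finally have "weq s r (g # Mw a es u fs) (Mw (r e) [] u (fs @ [e])) K"
        using Gh Nil by (simp add: Mw_eq)
      moreover have "nfok s r (r e) [] u (fs @ [e])"
        using ok Nil True by (simp add: nfok_def vp_append endv_append)
      ultimately show ?thesis by blast
    next
      case False
      then have "wz s r ([] @ [Gh e, V a] @ ?t) K" by (intro wz_ctx zGV)
      then show ?thesis using Gh Nil by (auto simp: Mw_eq)
    qed
  qed
qed

lemma nf_single: "\<exists>a es u fs. nfok s r a es u fs \<and> weq s r [g] (Mw a es u fs) K"
proof (cases g)
  case (V v)
  have "weq s r [V v] (Mw v [] v []) K" by (simp add: Mw_eq weq_sym wVV)
  moreover have "nfok s r v [] v []" by (simp add: nfok_def)
  ultimately show ?thesis using V by blast
next
  case (Ed e)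
  have "weq s r [Ed e] [V (s e), Ed e] K" by (rule weq_sym, rule wE1)
  also have "weq s r [V (s e), Ed e] [V (s e), Ed e, V (r e)] K"
    using weq_ctx[OF weq_sym[OF wE1'], where a="[V (s e)]" and b="[]"] by simp
  finally have "weq s r [Ed e] (Mw (s e) [e] (r e) []) K" by (simp add: Mw_eq)
  moreover have "nfok s r (s e) [e] (r e) []" by (simp add: nfok_def)
  ultimately show ?thesis using Ed by blast
next
  case (Gh e)
  have "weq s r [Gh e] [V (r e), Gh e] K" by (rule weq_sym, rule wE2)
  also have "weq s r [V (r e), Gh e] [V (r e), Gh e, V (s e)] K"
    using weq_ctx[OF weq_sym[OF wE2'], where a="[V (r e)]" and b="[]"] by simp
  finally have "weq s r [Gh e] (Mw (r e) [] (s e) [e]) K" by (simp add: Mw_eq)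
  moreover have "nfok s r (r e) [] (s e) [e]" by (simp add: nfok_def)
  ultimately show ?thesis using Gh by blast
qed

theorem normal_form:
  "w \<noteq> [] \<Longrightarrow> wz s r w K \<or> (\<exists>a es u fs. nfok s r a es u fs \<and> weq s r w (Mw a es u fs) K)"
proof (induction w)
  case Nil then show ?case by simp
next
  case (Cons g w)
  show ?case
  proof (cases "w = []")
    case True then show ?thesis using nf_single by blast
  next
    case False
    with Cons.IH consider "wz s r w K" | a es u fs where "nfok s r a es u fs" "weq s r w (Mw a es u fs) K"
      by blast
    then show ?thesis
    proof cases
      case 1
      then have "wz s r ([g] @ w @ []) K" by (rule wz_ctx)
      then show ?thesis by simp
    next
      case (2 a es u fs)
      have 3: "weq s r (g # w) (g # Mw a es u fs) K" using weq_ctx[OF 2(2), where a="[g]" and b="[]"] by simp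
      from nf_step[OF 2(1), of g K] show ?thesis
      proof
        assume "wz s r (g # Mw a es u fs) K"
        then show ?thesis using weq_wz[OF 3] by simp
      next
        assume "\<exists>a' es' u' fs'. nfok s r a' es' u' fs' \<and> weq s r (g # Mw a es u fs) (Mw a' es' u' fs') K"
        then obtain a' es' u' fs' where "nfok s r a' es' u' fs'" "weq s r (g # Mw a es u fs) (Mw a' es' u' fs') K" by blast
        then show ?thesis using weq_trans[OF 3] by blast
      qed
    qed
  qed
qed


lemma wstar_Cons[simp]: "wstar (g # w) = wstar w @ [gswap g]"
  by (simp add: wstar_def)
lemma wstar_map_Ed[simp]: "wstar (map Ed fs) = rev (map Gh fs)"
  by (simp add: wstar_def comp_def)

lemma QQ:
  assumes "vp s r u fs" "vp s r u' fs'"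
  shows "(u = u' \<longrightarrow> fs' = fs @ \<gamma> \<longrightarrow> weq s r (wstar (pth u fs) @ pth u' fs') (pth (endv r u fs) \<gamma>) K) \<and>
         (u = u' \<longrightarrow> fs = fs' @ \<gamma> \<longrightarrow> weq s r (wstar (pth u fs) @ pth u' fs') (wstar (pth (endv r u' fs') \<gamma>)) K) \<and>
         ((u \<noteq> u' \<or> (\<forall>\<gamma>. fs' \<noteq> fs @ \<gamma> \<and> fs \<noteq> fs' @ \<gamma>)) \<longrightarrow> wz s r (wstar (pth u fs) @ pth u' fs') K)"
  using assms
proof (induction fs arbitrary: u u' fs' \<gamma>)
  case Nil
  have w: "wstar (pth u []) @ pth u' fs' = [] @ [V u, V u'] @ map Ed fs'"
    by (simp add: wstar_pth pth_def)
  show ?case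
  proof (intro conjI impI)
    assume "u = u'" "fs' = [] @ \<gamma>"
    then show "weq s r (wstar (pth u []) @ pth u' fs') (pth (endv r u []) \<gamma>) K"
      unfolding w using weq_ctx[OF wVV, where a="[]" and b="map Ed fs'"] by (simp add: pth_def)
  next
    assume "u = u'" "[] = fs' @ \<gamma>"
    then show "weq s r (wstar (pth u []) @ pth u' fs') (wstar (pth (endv r u' fs') \<gamma>)) K"
      unfolding w using weq_ctx[OF wVV, where a="[]" and b="[]"] by (simp add: pth_def wstar_pth)
  next
    assume "u \<noteq> u' \<or> (\<forall>\<gamma>. fs' \<noteq> [] @ \<gamma> \<and> [] \<noteq> fs' @ \<gamma>)"
    then have "u \<noteq> u'" by auto
    then show "wz s r (wstar (pth u []) @ pth u' fs') K" unfolding w by (intro wz_ctx zVV)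
  qed
next
  case (Cons f fs1)
  from Cons.prems have sf: "s f = u" and vp1: "vp s r (r f) fs1" by auto
  show ?case
  proof (cases fs')
    case Nil
    have w: "wstar (pth u (f # fs1)) @ pth u' fs' = (rev (map Gh fs1) @ [Gh f]) @ [V u, V u'] @ []"
      using Nil by (simp add: wstar_pth pth_def)
    show ?thesis
    proof (intro conjI impI)
      assume "u = u'" "fs' = (f # fs1) @ \<gamma>"
      then show "weq s r (wstar (pth u (f # fs1)) @ pth u' fs') (pth (endv r u (f # fs1)) \<gamma>) K"
        using Nil by simp
    next
      assume a: "u = u'" "f # fs1 = fs' @ \<gamma>"
      have "weq s r (wstar (pth u (f # fs1)) @ pth u' fs') ((rev (map Gh fs1) @ [Gh f]) @ [V u] @ []) K"
        unfolding w using a by (intro weq_ctx) (simp add: wVV)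
      then show "weq s r (wstar (pth u (f # fs1)) @ pth u' fs') (wstar (pth (endv r u' fs') \<gamma>)) K"
      proof -
        from a Nil have g: "\<gamma> = f # fs1" by simp
        show ?thesis using \<open>weq s r (wstar (pth u (f # fs1)) @ pth u' fs') ((rev (map Gh fs1) @ [Gh f]) @ [V u] @ []) K\<close> a Nil
          unfolding g by (simp add: wstar_pth pth_def)
      qed
    next
      assume "u \<noteq> u' \<or> (\<forall>\<gamma>. fs' \<noteq> (f # fs1) @ \<gamma> \<and> f # fs1 \<noteq> fs' @ \<gamma>)"
      then have "u \<noteq> u'" using Nil by auto
      then show "wz s r (wstar (pth u (f # fs1)) @ pth u' fs') K" unfolding w by (intro wz_ctx zVV)
    qed
  next
    case (Cons f' fs1')
    with Cons.prems have sf': "s f' = u'" and vp1': "vp s r (r f') fs1'" by auto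
    have w: "wstar (pth u (f # fs1)) @ pth u' fs' = rev (map Gh fs1) @ [Gh f, V u, V u', Ed f'] @ map Ed fs1'"
      using Cons by (simp add: wstar_pth pth_def)
    show ?thesis
    proof (cases "u = u' \<and> f = f'")
      case False
      have z: "wz s r (wstar (pth u (f # fs1)) @ pth u' fs') K"
      proof (cases "u = u'")
        case False
        have "wz s r ((rev (map Gh fs1) @ [Gh f]) @ [V u, V u'] @ (Ed f' # map Ed fs1')) K"
          using False by (intro wz_ctx zVV)
        then show ?thesis unfolding w by simp
      next
        case True
        with \<open>\<not> (u = u' \<and> f = f')\<close> have ff: "f \<noteq> f'" by simp
        have "weq s r (rev (map Gh fs1) @ [Gh f, V u, V u', Ed f'] @ map Ed fs1')
              ((rev (map Gh fs1) @ [Gh f]) @ [V u, Ed f'] @ map Ed fs1') K"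
          using weq_ctx[OF wVV, where a="rev (map Gh fs1) @ [Gh f]" and b="Ed f' # map Ed fs1'"] True
          by simp
        also have "weq s r ((rev (map Gh fs1) @ [Gh f]) @ [V u, Ed f'] @ map Ed fs1')
              ((rev (map Gh fs1) @ [Gh f]) @ [Ed f'] @ map Ed fs1') K"
          using weq_ctx[OF wE1[of s r f'], where a="rev (map Gh fs1) @ [Gh f]" and b="map Ed fs1'"] sf' True
          by simp
        finally have "weq s r (wstar (pth u (f # fs1)) @ pth u' fs') (rev (map Gh fs1) @ [Gh f, Ed f'] @ map Ed fs1') K"
          unfolding w by simp
        moreover have "wz s r (rev (map Gh fs1) @ [Gh f, Ed f'] @ map Ed fs1') K"
          using ff by (intro wz_ctx zCK1)
        ultimately show ?thesis by (rule weq_wz)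
      qed
      show ?thesis
      proof (intro conjI impI)
        assume "u = u'" "fs' = (f # fs1) @ \<gamma>" with False Cons show "weq s r (wstar (pth u (f # fs1)) @ pth u' fs') (pth (endv r u (f # fs1)) \<gamma>) K" by simp
      next
        assume "u = u'" "f # fs1 = fs' @ \<gamma>" with False Cons show "weq s r (wstar (pth u (f # fs1)) @ pth u' fs') (wstar (pth (endv r u' fs') \<gamma>)) K" by simp
      next
        show "wz s r (wstar (pth u (f # fs1)) @ pth u' fs') K" by (rule z)
      qed
    next
      case True
      then have uu: "u = u'" and ff: "f = f'" by auto
      have "weq s r (rev (map Gh fs1) @ [Gh f, V u, V u', Ed f'] @ map Ed fs1')
              ((rev (map Gh fs1) @ [Gh f]) @ [V u, Ed f'] @ map Ed fs1') K"
        using weq_ctx[OF wVV, where a="rev (map Gh fs1) @ [Gh f]" and b="Ed f' # map Ed fs1'"] uu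
        by simp
      also have "weq s r ((rev (map Gh fs1) @ [Gh f]) @ [V u, Ed f'] @ map Ed fs1')
            (rev (map Gh fs1) @ [Gh f, Ed f'] @ map Ed fs1') K"
        using weq_ctx[OF wE1[of s r f'], where a="rev (map Gh fs1) @ [Gh f]" and b="map Ed fs1'"] sf' uu
        by simp
      also have "weq s r (rev (map Gh fs1) @ [Gh f, Ed f'] @ map Ed fs1')
            (rev (map Gh fs1) @ [V (r f)] @ map Ed fs1') K"
        using weq_ctx[OF wCK1[of s r f], where a="rev (map Gh fs1)" and b="map Ed fs1'"] ff by simp
      also have "weq s r (rev (map Gh fs1) @ [V (r f)] @ map Ed fs1')
            (rev (map Gh fs1) @ [V (r f), V (r f)] @ map Ed fs1') K"
        using weq_ctx[OF weq_sym[OF wVV], where a="rev (map Gh fs1)" and b="map Ed fs1'"] by simp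
      finally have main: "weq s r (wstar (pth u (f # fs1)) @ pth u' fs') (wstar (pth (r f) fs1) @ pth (r f) fs1') K"
        unfolding w by (simp add: wstar_pth pth_def)
      have IH: "(fs1' = fs1 @ \<gamma> \<longrightarrow> weq s r (wstar (pth (r f) fs1) @ pth (r f) fs1') (pth (endv r (r f) fs1) \<gamma>) K) \<and>
         (fs1 = fs1' @ \<gamma> \<longrightarrow> weq s r (wstar (pth (r f) fs1) @ pth (r f) fs1') (wstar (pth (endv r (r f) fs1') \<gamma>)) K) \<and>
         ((\<forall>\<gamma>. fs1' \<noteq> fs1 @ \<gamma> \<and> fs1 \<noteq> fs1' @ \<gamma>) \<longrightarrow> wz s r (wstar (pth (r f) fs1) @ pth (r f) fs1') K)"
        using Cons.IH[OF vp1, of "r f" fs1' \<gamma>] vp1' ff by simp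
      show ?thesis
      proof (intro conjI impI)
        assume "u = u'" "fs' = (f # fs1) @ \<gamma>"
        then have "fs1' = fs1 @ \<gamma>" using \<open>fs' = f' # fs1'\<close> by simp
        then show "weq s r (wstar (pth u (f # fs1)) @ pth u' fs') (pth (endv r u (f # fs1)) \<gamma>) K"
          using IH main by (auto intro: weq_trans)
      next
        assume "u = u'" "f # fs1 = fs' @ \<gamma>"
        then have "fs1 = fs1' @ \<gamma>" using \<open>fs' = f' # fs1'\<close> by simp
        then show "weq s r (wstar (pth u (f # fs1)) @ pth u' fs') (wstar (pth (endv r u' fs') \<gamma>)) K"
          using IH main \<open>fs' = f' # fs1'\<close> ff by (auto intro: weq_trans)
      next
        assume "u \<noteq> u' \<or> (\<forall>\<gamma>. fs' \<noteq> (f # fs1) @ \<gamma> \<and> f # fs1 \<noteq> fs' @ \<gamma>)"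
        then have "\<forall>\<gamma>. fs1' \<noteq> fs1 @ \<gamma> \<and> fs1 \<noteq> fs1' @ \<gamma>" using uu ff \<open>fs' = f' # fs1'\<close> by simp
        then show "wz s r (wstar (pth u (f # fs1)) @ pth u' fs') K"
          using IH main by (auto intro: weq_wz)
      qed
    qed
  qed
qed


locale LT = finv ks for ks :: "'k::field \<Rightarrow> 'k" +
  fixes s r :: "'e \<Rightarrow> 'v" and sc :: "'k \<Rightarrow> 'r::ring \<Rightarrow> 'r" and rs :: "'r \<Rightarrow> 'r"
    and t :: "(('v, 'e) gen list \<Rightarrow> 'k) \<Rightarrow> 'r"
  assumes ia: "involutive_algebra ks sc rs" and pd: "positive_definite rs"
    and tr: "lpa_trace s r t" and lin: "K_linear_trace sc t" and can: "canonical_trace s r ks t"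
begin

lemma t_add: "x \<in> Fset \<Longrightarrow> y \<in> Fset \<Longrightarrow> t (fadd x y) = t x + t y"
  using tr by (simp add: lpa_trace_def)
lemma t_comm: "x \<in> Fset \<Longrightarrow> y \<in> Fset \<Longrightarrow> t (fmul x y) = t (fmul y x)"
  using tr by (simp add: lpa_trace_def)
lemma t_eqv: "x \<in> Fset \<Longrightarrow> y \<in> Fset \<Longrightarrow> eqv s r x y \<Longrightarrow> t x = t y"
  using tr by (simp add: lpa_trace_def eqv_def)
lemma t_scal: "x \<in> Fset \<Longrightarrow> t (fscal a x) = sc a (t x)"
  using lin by (simp add: K_linear_trace_def)
lemma fadd_zero: "fadd fzero fzero = (fzero :: ('v,'e) gen list \<Rightarrow> 'k)"
  by (rule ext) (simp add: fadd_def fzero_def)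
lemma t_zero[simp]: "t fzero = 0"
  using t_add[of fzero fzero] by (simp add: fadd_zero)
lemma t_sub: "x \<in> Fset \<Longrightarrow> y \<in> Fset \<Longrightarrow> t (fsub x y) = t x - t y"
proof -
  assume xy: "x \<in> Fset" "y \<in> Fset"
  have "fadd (fsub x y) y = x" by (rule ext) (simp add: fadd_def fsub_def)
  then have "t x = t (fsub x y) + t y" using t_add[OF Fset_sub[OF xy] xy(2)] by simp
  then show ?thesis by (simp add: algebra_simps)
qed
lemma t_sum: "finite A \<Longrightarrow> (\<And>a. a \<in> A \<Longrightarrow> g a \<in> Fset) \<Longrightarrow> t (fsum g A) = (\<Sum>a\<in>A. t (g a))"
proof (induction A rule: finite_induct)
  case empty then show ?case by simp
next
  case (insert x F)
  then show ?case by (simp add: fsum_insert t_add Fset_sum)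
qed
lemma t_ideal: "x \<in> lpa_ideal s r \<Longrightarrow> t x = 0"
  using t_eqv[of x fzero] by (simp add: ideal_Fset eqv_zero_iff)

lemma t_weq: "u \<noteq> [] \<Longrightarrow> v \<noteq> [] \<Longrightarrow> weq s r u v TYPE('k) \<Longrightarrow> t (mon u) = t (mon v)"
  by (rule t_eqv) (auto simp: Fset_mon weq_def)
lemma t_wz: "wz s r u TYPE('k) \<Longrightarrow> t (mon u) = 0"
  by (simp add: wz_def t_ideal)

definition tau :: "'v \<Rightarrow> 'r" where "tau w = t (mon [V w])"

definition path_of :: "'v \<Rightarrow> 'e list \<Rightarrow> ('v, 'e) path" where
  "path_of a es = (if es = [] then PV a else PE es)"

lemma vp_valid: "vp s r a es \<Longrightarrow> valid_path s r (path_of a es)"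
proof (induction es arbitrary: a)
  case Nil then show ?case by (simp add: path_of_def)
next
  case (Cons e es)
  then have IH: "valid_path s r (path_of (r e) es)" by simp
  show ?case
  proof (cases es)
    case Nil then show ?thesis by (simp add: path_of_def)
  next
    case (Cons e' es')
    with IH have 1: "\<forall>i. Suc i < length es \<longrightarrow> r (es ! i) = s (es ! Suc i)" by (simp add: path_of_def)
    have 2: "r e = s e'" using Cons.prems Cons by simp
    show ?thesis unfolding path_of_def using 1 2 Cons
      by (auto simp: nth_Cons split: nat.splits)
  qed
qed

lemma range_path_of: "path_range r (path_of a es) = endv r a es"
  by (simp add: path_of_def endv_last)

lemma path_of_eq: "vp s r a es \<Longrightarrow> vp s r u fs \<Longrightarrow> path_of a es = path_of u fs \<longleftrightarrow> a = u \<and> es = fs"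
  by (cases es; cases fs) (auto simp: path_of_def)

lemma pw_front: "weq s r (V a # map Ed es @ X) (path_word (path_of a es) @ X) TYPE('k)" if "vp s r a es"
proof (cases es)
  case Nil then show ?thesis by (simp add: path_of_def)
next
  case (Cons e es')
  with that have "a = s e" by simp
  then show ?thesis using weq_ctx[OF wE1[of s r e], where a="[]" and b="map Ed es' @ X"] Cons
    by (simp add: path_of_def)
qed

lemma pw_back: "weq s r (Y @ rev (map Gh fs) @ [V u]) (Y @ wstar (path_word (path_of u fs))) TYPE('k)" if "vp s r u fs"
proof (cases fs)
  case Nil then show ?thesis by (simp add: path_of_def)
next
  case (Cons f fs')
  with that have "u = s f" by simp
  then show ?thesis using weq_ctx[OF wE2'[of s r f], where a="Y @ rev (map Gh fs')" and b="[]"] Cons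
    by (simp add: path_of_def comp_def)
qed

lemma t_Mw: assumes "nfok s r a es u fs"
  shows "t (mon (Mw a es u fs)) = (if a = u \<and> es = fs then tau (endv r a es) else 0)"
proof -
  from assms have v1: "vp s r a es" and v2: "vp s r u fs" and en: "endv r a es = endv r u fs"
    by (auto simp: nfok_def)
  let ?p = "path_of a es" and ?q = "path_of u fs"
  have "weq s r (Mw a es u fs) (path_word ?p @ rev (map Gh fs) @ [V u]) TYPE('k)"
    unfolding Mw_eq using pw_front[OF v1] by simp
  also have "weq s r (path_word ?p @ rev (map Gh fs) @ [V u]) (path_word ?p @ wstar (path_word ?q)) TYPE('k)"
    using pw_back[OF v2] by simp
  finally have w: "weq s r (Mw a es u fs) (path_word ?p @ wstar (path_word ?q)) TYPE('k)" .
  have ne: "path_word ?p @ wstar (path_word ?q) \<noteq> []" by (simp add: path_of_def)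
  have "t (mon (Mw a es u fs)) = t (mon (path_word ?p @ wstar (path_word ?q)))"
    by (rule t_weq[OF _ ne w]) (simp add: Mw_eq)
  also have "\<dots> = t (fmul (mon (path_word ?p)) (fstar ks (mon (path_word ?q))))"
    by (simp add: fmul_mon_mon)
  also have "\<dots> = (if ?p = ?q then t (mon [V (path_range r ?p)]) else 0)"
    using can vp_valid[OF v1] vp_valid[OF v2] en unfolding canonical_trace_def
    by (simp add: range_path_of)
  finally show ?thesis using path_of_eq[OF v1 v2] by (simp add: range_path_of tau_def)
qed

end


type_synonym ('v, 'e) tup = "'v \<times> 'e list \<times> 'v \<times> 'e list"

fun ext :: "('v, 'e) tup \<Rightarrow> 'e list \<Rightarrow> ('v, 'e) tup" where
  "ext (a, es, u, fs) \<gamma> = (a, es @ \<gamma>, u, fs @ \<gamma>)"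
fun Mt :: "('v, 'e) tup \<Rightarrow> ('v, 'e) gen list" where
  "Mt (a, es, u, fs) = Mw a es u fs"
fun nft :: "('e \<Rightarrow> 'v) \<Rightarrow> ('e \<Rightarrow> 'v) \<Rightarrow> ('v, 'e) tup \<Rightarrow> bool" where
  "nft s r (a, es, u, fs) = nfok s r a es u fs"
fun endt :: "('e \<Rightarrow> 'v) \<Rightarrow> ('v, 'e) tup \<Rightarrow> 'v" where
  "endt r (a, es, u, fs) = endv r a es"
fun qpart :: "('v, 'e) tup \<Rightarrow> 'e list" where
  "qpart (a, es, u, fs) = fs"

lemma ext_ext[simp]: "ext (ext \<alpha> \<gamma>) \<delta> = ext \<alpha> (\<gamma> @ \<delta>)"
  by (cases \<alpha>) auto
lemma ext_Nil[simp]: "ext \<alpha> [] = \<alpha>"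
  by (cases \<alpha>) auto
lemma Mt_ne[simp]: "Mt \<alpha> \<noteq> []"
  by (cases \<alpha>) (simp add: Mw_eq)

context finv begin
lemma weq_wstar: "weq s r u v TYPE('k) \<Longrightarrow> weq s r (wstar u) (wstar v) TYPE('k)"
  unfolding weq_def using eqv_star by fastforce
lemma wz_wstar: "wz s r u TYPE('k) \<Longrightarrow> wz s r (wstar u) TYPE('k)"
  unfolding wz_def using ideal_star by fastforce
end

lemma pth_app: "vp s r a es \<Longrightarrow> weq s r (pth a es @ pth (endv r a es) \<gamma>) (pth a (es @ \<gamma>)) K"
  using weq_ctx[OF pth_end[of s r a es K], where a="[]" and b="map Ed \<gamma>"]
  by (simp add: pth_def)

context LT begin

definition G :: "('v, 'e) tup \<Rightarrow> ('v, 'e) tup \<Rightarrow> 'r" where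
  "G \<alpha> \<beta> = (if \<exists>\<gamma>. \<beta> = ext \<alpha> \<gamma> then tau (endt r \<beta>) else if \<exists>\<gamma>. \<alpha> = ext \<beta> \<gamma> then tau (endt r \<alpha>) else 0)"

lemma TG:
  assumes "nft s r \<alpha>" "nft s r \<beta>"
  shows "t (mon (Mt \<alpha> @ wstar (Mt \<beta>))) = G \<alpha> \<beta>"
proof -
  obtain a es u fs where al: "\<alpha> = (a, es, u, fs)" by (cases \<alpha>) auto
  obtain a' es' u' fs' where be: "\<beta> = (a', es', u', fs')" by (cases \<beta>) auto
  from assms al be have v1: "vp s r a es" "vp s r u fs" "endv r a es = endv r u fs"
    and v2: "vp s r a' es'" "vp s r u' fs'" "endv r a' es' = endv r u' fs'"
    by (auto simp: nfok_def)
  have word: "Mt \<alpha> @ wstar (Mt \<beta>) = pth a es @ (wstar (pth u fs) @ pth u' fs') @ wstar (pth a' es')"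
    by (simp add: al be Mw_def wstar_append)
  note Q = QQ[OF v1(2) v2(2), where K="TYPE('k)"]
  show ?thesis
  proof (cases "u = u' \<and> (\<exists>\<gamma>. fs' = fs @ \<gamma>)")
    case True
    then obtain \<gamma> where uu: "u = u'" and g: "fs' = fs @ \<gamma>" by blast
    have "weq s r (pth a es @ (wstar (pth u fs) @ pth u' fs') @ wstar (pth a' es'))
             (pth a es @ pth (endv r u fs) \<gamma> @ wstar (pth a' es')) TYPE('k)"
      using Q[of \<gamma>] uu g by (intro weq_ctx) simp
    also have "weq s r (pth a es @ pth (endv r u fs) \<gamma> @ wstar (pth a' es')) ([] @ pth a (es @ \<gamma>) @ wstar (pth a' es')) TYPE('k)"
      using weq_ctx[OF pth_app[OF v1(1), of \<gamma>], where a="[]" and b="wstar (pth a' es')"] v1(3) by simp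
    finally have w: "weq s r (Mt \<alpha> @ wstar (Mt \<beta>)) (Mw a (es @ \<gamma>) a' es') TYPE('k)"
      unfolding word by (simp add: Mw_def)
    have ok: "nfok s r a (es @ \<gamma>) a' es'"
      using v1 v2 uu g by (simp add: nfok_def vp_append endv_append)
    have "t (mon (Mt \<alpha> @ wstar (Mt \<beta>))) = t (mon (Mw a (es @ \<gamma>) a' es'))"
      by (rule t_weq[OF _ _ w]) (simp_all add: Mw_eq)
    also have "\<dots> = (if a = a' \<and> es @ \<gamma> = es' then tau (endv r a (es @ \<gamma>)) else 0)"
      by (rule t_Mw[OF ok])
    also have "\<dots> = G \<alpha> \<beta>"
    proof (cases "a = a' \<and> es @ \<gamma> = es'")
      case True
      then have "\<beta> = ext \<alpha> \<gamma>" using al be uu g by simp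
      then show ?thesis using True by (simp add: G_def al be)
    next
      case False
      have n1: "\<not> (\<exists>\<delta>. \<beta> = ext \<alpha> \<delta>)" using False al be g by auto
      have n2: "\<not> (\<exists>\<delta>. \<alpha> = ext \<beta> \<delta>)"
      proof
        assume "\<exists>\<delta>. \<alpha> = ext \<beta> \<delta>"
        then obtain \<delta> where "fs = fs' @ \<delta>" "es = es' @ \<delta>" "a = a'" using al be by auto
        with g have "\<delta> = []" "\<gamma> = []" by auto
        then show False using False \<open>es = es' @ \<delta>\<close> \<open>a = a'\<close> by simp
      qed
      show ?thesis using False n1 n2 by (auto simp: G_def)
    qed
    finally show ?thesis .
  next
    case notA: False
    show ?thesis
    proof (cases "u = u' \<and> (\<exists>\<gamma>. fs = fs' @ \<gamma>)")
      case True
      then obtain \<gamma> where uu: "u = u'" and g: "fs = fs' @ \<gamma>" by blast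
      have "weq s r (pth a es @ (wstar (pth u fs) @ pth u' fs') @ wstar (pth a' es'))
               (pth a es @ wstar (pth (endv r u' fs') \<gamma>) @ wstar (pth a' es')) TYPE('k)"
        using Q[of \<gamma>] uu g by (intro weq_ctx) simp
      also have "weq s r (pth a es @ wstar (pth (endv r u' fs') \<gamma>) @ wstar (pth a' es'))
           (pth a es @ wstar (pth a' (es' @ \<gamma>)) @ []) TYPE('k)"
      proof -
        have "weq s r (wstar (pth a' es' @ pth (endv r a' es') \<gamma>)) (wstar (pth a' (es' @ \<gamma>))) TYPE('k)"
          by (rule weq_wstar[OF pth_app[OF v2(1)]])
        then show ?thesis using weq_ctx[where a="pth a es" and b="[]"] v2(3)
          by (simp add: wstar_append)
      qed
      finally have w: "weq s r (Mt \<alpha> @ wstar (Mt \<beta>)) (Mw a es a' (es' @ \<gamma>)) TYPE('k)"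
        unfolding word by (simp add: Mw_def)
      have ok: "nfok s r a es a' (es' @ \<gamma>)"
        using v1 v2 uu g by (simp add: nfok_def vp_append endv_append)
      have "t (mon (Mt \<alpha> @ wstar (Mt \<beta>))) = t (mon (Mw a es a' (es' @ \<gamma>)))"
        by (rule t_weq[OF _ _ w]) (simp_all add: Mw_eq)
      also have "\<dots> = (if a = a' \<and> es = es' @ \<gamma> then tau (endv r a es) else 0)"
        by (rule t_Mw[OF ok])
      also have "\<dots> = G \<alpha> \<beta>"
      proof -
        have n1: "\<not> (\<exists>\<delta>. \<beta> = ext \<alpha> \<delta>)" using notA al be by auto
        have "(\<exists>\<delta>. \<alpha> = ext \<beta> \<delta>) \<longleftrightarrow> a = a' \<and> es = es' @ \<gamma>"
          using al be uu g by auto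
        then show ?thesis using n1 by (simp add: G_def al)
      qed
      finally show ?thesis .
    next
      case notB: False
      have "u \<noteq> u' \<or> (\<forall>\<gamma>. fs' \<noteq> fs @ \<gamma> \<and> fs \<noteq> fs' @ \<gamma>)" using notA notB by blast
      then have "wz s r (wstar (pth u fs) @ pth u' fs') TYPE('k)" using Q by blast
      then have "wz s r (Mt \<alpha> @ wstar (Mt \<beta>)) TYPE('k)" unfolding word by (rule wz_ctx)
      then have "t (mon (Mt \<alpha> @ wstar (Mt \<beta>))) = 0" by (rule t_wz)
      moreover have "\<not> (\<exists>\<delta>. \<beta> = ext \<alpha> \<delta>)" "\<not> (\<exists>\<delta>. \<alpha> = ext \<beta> \<delta>)"
        using notA notB al be by auto
      ultimately show ?thesis by (simp add: G_def)
    qed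
  qed
qed

end


lemma fsub_fzero[simp]: "fsub x fzero = x" by (rule ext) (simp add: fsub_def fzero_def)

context LT begin

definition T :: "('v,'e) gen list \<Rightarrow> ('v,'e) gen list \<Rightarrow> 'r" where
  "T u v = t (mon (u @ wstar v))"

lemma t_bilin:
  assumes "finite I" "finite J" "u \<noteq> []" "v \<noteq> []" "\<And>i. i \<in> I \<Longrightarrow> p i \<noteq> []" "\<And>j. j \<in> J \<Longrightarrow> q j \<noteq> []"
  shows "t (fmul (fsub (mon u) (fsum (\<lambda>i. mon (p i)) I)) (fstar ks (fsub (mon v) (fsum (\<lambda>j. mon (q j)) J))))
       = T u v - (\<Sum>j\<in>J. T u (q j)) - (\<Sum>i\<in>I. T (p i) v) + (\<Sum>i\<in>I. \<Sum>j\<in>J. T (p i) (q j))"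
proof -
  have F1: "mon (x @ wstar y) \<in> Fset" if "x \<noteq> []" for x y :: "('v,'e) gen list"
    using that by (simp add: Fset_mon)
  have S1: "fsum (\<lambda>j. mon (u @ wstar (q j))) J \<in> Fset" using assms by (intro Fset_sum F1) auto
  have S2: "fsum (\<lambda>i. mon (p i @ wstar v)) I \<in> Fset" using assms by (intro Fset_sum F1) auto
  have S3: "fsum (\<lambda>i. fsum (\<lambda>j. mon (p i @ wstar (q j))) J) I \<in> Fset"
    using assms by (intro Fset_sum F1) auto
  have e: "fmul (fsub (mon u) (fsum (\<lambda>i. mon (p i)) I)) (fstar ks (fsub (mon v) (fsum (\<lambda>j. mon (q j)) J)))
     = fsub (fsub (mon (u @ wstar v)) (fsum (\<lambda>j. mon (u @ wstar (q j))) J))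
            (fsub (fsum (\<lambda>i. mon (p i @ wstar v)) I) (fsum (\<lambda>i. fsum (\<lambda>j. mon (p i @ wstar (q j))) J) I))"
    apply (simp add: fstar_sub fstar_sum fmul_sub_left fmul_sub_right fmul_sum_left fmul_sum_right fmul_mon_mon)
    apply (rule ext)
    apply (simp add: fsub_def fsum_def sum_subtractf algebra_simps)
    apply (subst sum.swap[of _ J I])
    apply simp
    done
  show ?thesis
    unfolding e using assms
    by (simp add: t_sub Fset_sub Fset_mon S1 S2 S3 t_sum Fset_sum F1 T_def)
qed

definition Fw :: "'e set \<Rightarrow> 'v \<Rightarrow> 'e set" where "Fw F w = {f \<in> F. s f = w}"

definition Eset :: "nat \<Rightarrow> 'e set \<Rightarrow> ('v,'e) tup \<Rightarrow> 'e set" where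
  "Eset n F \<alpha> = (if length (qpart \<alpha>) = n then {} else Fw F (endt r \<alpha>))"

definition Xp :: "nat \<Rightarrow> 'e set \<Rightarrow> ('v,'e) tup \<Rightarrow> ('v, 'e) gen list \<Rightarrow> 'k" where
  "Xp n F \<alpha> = fsub (mon (Mt \<alpha>)) (fsum (\<lambda>f. mon (Mt (ext \<alpha> [f]))) (Eset n F \<alpha>))"

definition gram :: "nat \<Rightarrow> 'e set \<Rightarrow> ('v,'e) tup \<Rightarrow> 'r" where
  "gram n F \<alpha> = tau (endt r \<alpha>) - (\<Sum>f\<in>Eset n F \<alpha>. tau (r f))"

definition good :: "nat \<Rightarrow> 'e set \<Rightarrow> ('v,'e) tup \<Rightarrow> bool" where
  "good n F \<alpha> \<longleftrightarrow> nft s r \<alpha> \<and> set (qpart \<alpha>) \<subseteq> F \<and> length (qpart \<alpha>) \<le> n"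

lemma finite_Eset: "finite F \<Longrightarrow> finite (Eset n F \<alpha>)"
  by (simp add: Eset_def Fw_def)

lemma nft_ext1: "nft s r \<alpha> \<Longrightarrow> s f = endt r \<alpha> \<Longrightarrow> nft s r (ext \<alpha> [f])"
  by (cases \<alpha>) (auto simp: nfok_def vp_append endv_append)

lemma endt_ext1: "endt r (ext \<alpha> [f]) = r f"
  by (cases \<alpha>) (simp add: endv_append)

lemma Eset_s: "f \<in> Eset n F \<alpha> \<Longrightarrow> s f = endt r \<alpha>"
  by (simp add: Eset_def Fw_def split: if_splits)

lemma t_Xp: assumes "finite F" "nft s r \<alpha>" "nft s r \<beta>"
  shows "t (fmul (Xp n F \<alpha>) (fstar ks (Xp n F \<beta>))) =
    G \<alpha> \<beta> - (\<Sum>g\<in>Eset n F \<beta>. G \<alpha> (ext \<beta> [g])) - (\<Sum>f\<in>Eset n F \<alpha>. G (ext \<alpha> [f]) \<beta>)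
      + (\<Sum>f\<in>Eset n F \<alpha>. \<Sum>g\<in>Eset n F \<beta>. G (ext \<alpha> [f]) (ext \<beta> [g]))"
  unfolding Xp_def
  apply (subst t_bilin)
  using assms apply (simp_all add: finite_Eset)
  using assms by (simp add: T_def TG nft_ext1 Eset_s)

lemma rel_ext1_left: "(\<exists>\<gamma>. \<beta> = ext (ext \<alpha> [f]) \<gamma>) \<longleftrightarrow> (\<exists>\<gamma>. \<beta> = ext \<alpha> (f # \<gamma>))"
  by simp

lemma ext_eq_iff: "ext \<alpha> \<gamma> = ext \<alpha> \<delta> \<longleftrightarrow> \<gamma> = \<delta>"
  by (cases \<alpha>) auto

lemma ext_eq_self: "ext \<alpha> \<gamma> = \<alpha> \<longleftrightarrow> \<gamma> = []"
  using ext_eq_iff[of \<alpha> \<gamma> "[]"] by simp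

end


lemma app_split_same:
  assumes "a @ y = b @ L" "c @ y = d @ L" "length y \<le> length L"
  shows "\<exists>\<nu>. a = b @ \<nu> \<and> c = d @ \<nu>"
proof -
  let ?\<nu> = "take (length L - length y) L"
  have la: "length a = length b + length L - length y" using arg_cong[OF assms(1), of length] by simp
  have lc: "length c = length d + length L - length y" using arg_cong[OF assms(2), of length] by simp
  have "a = take (length a) (a @ y)" by simp
  also have "\<dots> = take (length a) (b @ L)" using assms(1) by simp
  also have "\<dots> = b @ ?\<nu>" using la assms(3) by (simp add: take_append)
  finally have 1: "a = b @ ?\<nu>" .
  have "c = take (length c) (c @ y)" by simp
  also have "\<dots> = take (length c) (d @ L)" using assms(2) by simp
  also have "\<dots> = d @ ?\<nu>" using lc assms(3) by (simp add: take_append)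
  finally have 2: "c = d @ ?\<nu>" .
  from 1 2 show ?thesis by blast
qed

definition related :: "('v,'e) tup \<Rightarrow> ('v,'e) tup \<Rightarrow> bool" where
  "related \<alpha> \<beta> \<longleftrightarrow> (\<exists>\<gamma>. \<beta> = ext \<alpha> \<gamma>) \<or> (\<exists>\<gamma>. \<alpha> = ext \<beta> \<gamma>)"

lemma related_ext_ext:
  assumes "ext \<beta> y = ext (ext \<alpha> x) \<mu>" shows "related \<alpha> \<beta>"
proof -
  obtain a es u fs where al: "\<alpha> = (a, es, u, fs)" by (cases \<alpha>) auto
  obtain a' es' u' fs' where be: "\<beta> = (a', es', u', fs')" by (cases \<beta>) auto
  from assms al be have e1: "es' @ y = es @ (x @ \<mu>)" and e2: "fs' @ y = fs @ (x @ \<mu>)"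
    and aa: "a' = a" "u' = u" by auto
  show ?thesis
  proof (cases "length y \<le> length (x @ \<mu>)")
    case True
    from app_split_same[OF e1 e2 True] obtain \<nu> where "es' = es @ \<nu>" "fs' = fs @ \<nu>" by blast
    then have "\<beta> = ext \<alpha> \<nu>" using al be aa by simp
    then show ?thesis by (auto simp: related_def)
  next
    case False
    from app_split_same[OF e1[symmetric] e2[symmetric]] False
    obtain \<nu> where "es = es' @ \<nu>" "fs = fs' @ \<nu>" by force
    then have "\<alpha> = ext \<beta> \<nu>" using al be aa by simp
    then show ?thesis by (auto simp: related_def)
  qed
qed

lemma related_ext: "related (ext \<alpha> x) (ext \<beta> y) \<Longrightarrow> related \<alpha> \<beta>"
  unfolding related_def
  by (metis related_def related_ext_ext)

lemma ext_inj: "ext \<alpha> \<gamma> = ext \<alpha> \<delta> \<longleftrightarrow> \<gamma> = \<delta>"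
  by (cases \<alpha>) auto

lemma endt_ext: "endt r (ext \<alpha> \<gamma>) = endv r (endt r \<alpha>) \<gamma>"
  by (cases \<alpha>) (simp add: endv_append)

lemma endv_snoc[simp]: "endv r v (xs @ [g]) = r g"
  by (simp add: endv_append)

context LT begin

lemma G_unrel: "\<not> related \<alpha> \<beta> \<Longrightarrow> G \<alpha> \<beta> = 0"
  by (simp add: G_def related_def)

lemma Gext: "G (ext \<alpha> x) (ext \<alpha> y) =
   (if \<exists>\<mu>. y = x @ \<mu> then tau (endv r (endt r \<alpha>) y) else if \<exists>\<mu>. x = y @ \<mu> then tau (endv r (endt r \<alpha>) x) else 0)"
  unfolding G_def by (simp add: ext_inj endt_ext)

lemma sum_if_eq: "finite A \<Longrightarrow> (\<Sum>f\<in>A. if f = g then X else 0) = (if g \<in> A then X else 0)"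
  by (simp add: sum.delta')

lemma Gram_same: assumes "finite F" "nft s r \<alpha>"
  shows "t (fmul (Xp n F \<alpha>) (fstar ks (Xp n F \<alpha>))) = gram n F \<alpha>"
proof -
  let ?E = "Eset n F \<alpha>"
  have fE: "finite ?E" using assms by (simp add: finite_Eset)
  have "G \<alpha> \<alpha> = tau (endt r \<alpha>)" using Gext[of \<alpha> "[]" "[]"] by simp
  moreover have "\<And>g. G \<alpha> (ext \<alpha> [g]) = tau (r g)" using Gext[of \<alpha> "[]"] by simp
  moreover have "\<And>f. G (ext \<alpha> [f]) \<alpha> = tau (r f)" using Gext[of \<alpha> _ "[]"] by simp
  moreover have "\<And>f g. G (ext \<alpha> [f]) (ext \<alpha> [g]) = (if g = f then tau (r f) else 0)"
    by (simp add: Gext)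
  ultimately show ?thesis
    using assms fE by (simp add: t_Xp sum_if_eq gram_def)
qed

lemma Gram_ext: assumes "finite F" "good n F \<alpha>" "good n F (ext \<alpha> (g0 # \<gamma>))"
  shows "t (fmul (Xp n F \<alpha>) (fstar ks (Xp n F (ext \<alpha> (g0 # \<gamma>))))) = 0"
proof -
  let ?\<beta> = "ext \<alpha> (g0 # \<gamma>)"
  let ?E = "Eset n F \<alpha>" and ?E' = "Eset n F ?\<beta>"
  have fE: "finite ?E" "finite ?E'" using assms by (simp_all add: finite_Eset)
  obtain a es u fs where al: "\<alpha> = (a, es, u, fs)" by (cases \<alpha>) auto
  from assms(3) al have "length (fs @ g0 # \<gamma>) \<le> n" "g0 \<in> F" "s g0 = endv r u fs"
    by (auto simp: good_def nfok_def vp_append)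
  moreover have "endv r a es = endv r u fs" using assms(2) al by (simp add: good_def nfok_def)
  ultimately have g0E: "g0 \<in> ?E" using al by (simp add: Eset_def Fw_def)
  have nb: "nft s r ?\<beta>" using assms(3) by (simp add: good_def)
  have e1: "G \<alpha> ?\<beta> = tau (endt r ?\<beta>)" using Gext[of \<alpha> "[]" "g0 # \<gamma>"] by (simp add: endt_ext)
  have e2: "\<And>g. G \<alpha> (ext ?\<beta> [g]) = tau (r g)"
    using Gext[of \<alpha> "[]"] by (simp add: endt_ext)
  have e3: "\<And>f. G (ext \<alpha> [f]) ?\<beta> = (if f = g0 then tau (endt r ?\<beta>) else 0)"
    using Gext[of \<alpha> _ "g0 # \<gamma>"] by (auto simp: endt_ext)
  have e4: "\<And>f g. G (ext \<alpha> [f]) (ext ?\<beta> [g]) = (if f = g0 then tau (r g) else 0)"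
    using Gext[of \<alpha>] by (auto simp: endt_ext)
  have s3: "(\<Sum>f\<in>?E. G (ext \<alpha> [f]) ?\<beta>) = tau (endt r ?\<beta>)"
    using fE g0E by (simp add: e3 sum_if_eq)
  have s4': "\<And>f. (\<Sum>g\<in>?E'. G (ext \<alpha> [f]) (ext ?\<beta> [g])) = (if f = g0 then (\<Sum>g\<in>?E'. tau (r g)) else 0)"
    by (simp add: e4 del: ext_ext)
  have s4: "(\<Sum>f\<in>?E. \<Sum>g\<in>?E'. G (ext \<alpha> [f]) (ext ?\<beta> [g])) = (\<Sum>g\<in>?E'. tau (r g))"
    unfolding s4' using fE g0E by (simp add: sum_if_eq)
  have s2: "(\<Sum>g\<in>?E'. G \<alpha> (ext ?\<beta> [g])) = (\<Sum>g\<in>?E'. tau (r g))"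
    by (simp add: e2 del: ext_ext)
  have "t (fmul (Xp n F \<alpha>) (fstar ks (Xp n F ?\<beta>))) =
    G \<alpha> ?\<beta> - (\<Sum>g\<in>?E'. G \<alpha> (ext ?\<beta> [g])) - (\<Sum>f\<in>?E. G (ext \<alpha> [f]) ?\<beta>)
      + (\<Sum>f\<in>?E. \<Sum>g\<in>?E'. G (ext \<alpha> [f]) (ext ?\<beta> [g]))"
    using assms(1,2) nb by (intro t_Xp) (simp_all add: good_def)
  then show ?thesis unfolding s2 s3 s4 e1 by simp
qed


lemma Gram_ext2: assumes "finite F" "good n F \<beta>" "good n F (ext \<beta> (f0 # \<gamma>))"
  shows "t (fmul (Xp n F (ext \<beta> (f0 # \<gamma>))) (fstar ks (Xp n F \<beta>))) = 0"
proof -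
  let ?\<alpha> = "ext \<beta> (f0 # \<gamma>)"
  let ?E = "Eset n F ?\<alpha>" and ?E' = "Eset n F \<beta>"
  have fE: "finite ?E" "finite ?E'" using assms by (simp_all add: finite_Eset)
  obtain a es u fs where be: "\<beta> = (a, es, u, fs)" by (cases \<beta>) auto
  from assms(3) be have "length (fs @ f0 # \<gamma>) \<le> n" "f0 \<in> F" "s f0 = endv r u fs"
    by (auto simp: good_def nfok_def vp_append)
  moreover have "endv r a es = endv r u fs" using assms(2) be by (simp add: good_def nfok_def)
  ultimately have f0E: "f0 \<in> ?E'" using be by (simp add: Eset_def Fw_def)
  have na: "nft s r ?\<alpha>" using assms(3) by (simp add: good_def)
  have ea: "endt r ?\<alpha> = endv r (r f0) \<gamma>" by (simp add: endt_ext)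
  have e1: "G ?\<alpha> \<beta> = tau (endt r ?\<alpha>)" using Gext[of \<beta> "f0 # \<gamma>" "[]"] by (simp add: endt_ext)
  have e2: "\<And>g. G ?\<alpha> (ext \<beta> [g]) = (if g = f0 then tau (endt r ?\<alpha>) else 0)"
    using Gext[of \<beta> "f0 # \<gamma>"] by (auto simp: endt_ext del: ext_ext)
  have e3: "\<And>f. G (ext ?\<alpha> [f]) \<beta> = tau (r f)"
    using Gext[of \<beta> _ "[]"] by (simp add: endt_ext)
  have e4: "\<And>f g. G (ext ?\<alpha> [f]) (ext \<beta> [g]) = (if g = f0 then tau (r f) else 0)"
    using Gext[of \<beta>] by (auto simp: endt_ext)
  have s2: "(\<Sum>g\<in>?E'. G ?\<alpha> (ext \<beta> [g])) = tau (endt r ?\<alpha>)"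
    using fE f0E by (simp add: e2 sum_if_eq del: ext_ext)
  have s3: "(\<Sum>f\<in>?E. G (ext ?\<alpha> [f]) \<beta>) = (\<Sum>f\<in>?E. tau (r f))"
    by (simp add: e3 del: ext_ext)
  have s4: "(\<Sum>f\<in>?E. \<Sum>g\<in>?E'. G (ext ?\<alpha> [f]) (ext \<beta> [g])) = (\<Sum>f\<in>?E. tau (r f))"
    using fE f0E by (simp add: e4 sum_if_eq del: ext_ext)
  have "t (fmul (Xp n F ?\<alpha>) (fstar ks (Xp n F \<beta>))) =
    G ?\<alpha> \<beta> - (\<Sum>g\<in>?E'. G ?\<alpha> (ext \<beta> [g])) - (\<Sum>f\<in>?E. G (ext ?\<alpha> [f]) \<beta>)
      + (\<Sum>f\<in>?E. \<Sum>g\<in>?E'. G (ext ?\<alpha> [f]) (ext \<beta> [g]))"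
    using assms(1,2) na by (intro t_Xp) (simp_all add: good_def)
  then show ?thesis unfolding s2 s3 s4 e1 by simp
qed

lemma related_ext_r: "related \<alpha> (ext \<beta> y) \<Longrightarrow> related \<alpha> \<beta>"
  using related_ext[of \<alpha> "[]" \<beta> y] by simp
lemma related_ext_l: "related (ext \<alpha> x) \<beta> \<Longrightarrow> related \<alpha> \<beta>"
  using related_ext[of \<alpha> x \<beta> "[]"] by simp

lemma Gram_unrel: assumes "finite F" "nft s r \<alpha>" "nft s r \<beta>" "\<not> related \<alpha> \<beta>"
  shows "t (fmul (Xp n F \<alpha>) (fstar ks (Xp n F \<beta>))) = 0"
proof -
  have "G \<alpha> \<beta> = 0" "\<And>g. G \<alpha> (ext \<beta> [g]) = 0" "\<And>f. G (ext \<alpha> [f]) \<beta> = 0"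
    "\<And>f g. G (ext \<alpha> [f]) (ext \<beta> [g]) = 0"
    using assms(4) by (auto intro!: G_unrel dest: related_ext related_ext_l related_ext_r)
  then show ?thesis using assms by (simp add: t_Xp del: ext_ext)
qed

lemma Gram: assumes "finite F" "good n F \<alpha>" "good n F \<beta>"
  shows "t (fmul (Xp n F \<alpha>) (fstar ks (Xp n F \<beta>))) = (if \<alpha> = \<beta> then gram n F \<alpha> else 0)"
proof (cases "\<alpha> = \<beta>")
  case True then show ?thesis using Gram_same assms by (simp add: good_def)
next
  case False
  show ?thesis
  proof (cases "related \<alpha> \<beta>")
    case True
    then consider \<gamma> where "\<beta> = ext \<alpha> \<gamma>" | \<gamma> where "\<alpha> = ext \<beta> \<gamma>" by (auto simp: related_def)
    then show ?thesis
    proof cases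
      case (1 \<gamma>)
      with False obtain g0 \<gamma>' where "\<gamma> = g0 # \<gamma>'" by (cases \<gamma>) auto
      then show ?thesis using Gram_ext[of F n \<alpha> g0 \<gamma>'] assms 1 False by simp
    next
      case (2 \<gamma>)
      with False obtain f0 \<gamma>' where "\<gamma> = f0 # \<gamma>'" by (cases \<gamma>) auto
      then show ?thesis using Gram_ext2[of F n \<beta> f0 \<gamma>'] assms 2 False by simp
    qed
  next
    case False
    then show ?thesis using Gram_unrel assms \<open>\<alpha> \<noteq> \<beta>\<close> by (simp add: good_def)
  qed
qed

end


context LT begin

definition Gm :: "nat \<Rightarrow> 'e set \<Rightarrow> ('v,'e) tup \<Rightarrow> 'e list set" where
  "Gm n F \<alpha> = {\<gamma>. set \<gamma> \<subseteq> F \<and> vp s r (endt r \<alpha>) \<gamma> \<and> length (qpart \<alpha>) + length \<gamma> \<le> n}"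

lemma finite_Gm: "finite F \<Longrightarrow> finite (Gm n F \<alpha>)"
  by (rule finite_subset[OF _ finite_lists_length_le[of F n]]) (auto simp: Gm_def)

lemma qpart_ext[simp]: "qpart (ext \<alpha> \<gamma>) = qpart \<alpha> @ \<gamma>"
  by (cases \<alpha>) auto

lemma Gm_split: assumes "length (qpart \<alpha>) < n"
  shows "Gm n F \<alpha> = insert [] ((\<lambda>(f, \<gamma>). f # \<gamma>) ` (SIGMA f:Eset n F \<alpha>. Gm n F (ext \<alpha> [f])))"
  using assms
  apply (auto simp: Gm_def Eset_def Fw_def endt_ext image_iff)
  apply (case_tac x)
   apply auto
  done

lemma expand:
  assumes "finite F" "nft s r \<alpha>" "set (qpart \<alpha>) \<subseteq> F" "length (qpart \<alpha>) \<le> n"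
  shows "mon (Mt \<alpha>) = fsum (\<lambda>\<gamma>. Xp n F (ext \<alpha> \<gamma>)) (Gm n F \<alpha>)"
proof -
  { fix k
    have "\<And>\<alpha>. k = n - length (qpart \<alpha>) \<Longrightarrow> nft s r \<alpha> \<Longrightarrow> set (qpart \<alpha>) \<subseteq> F \<Longrightarrow> length (qpart \<alpha>) \<le> n \<Longrightarrow>
        mon (Mt \<alpha>) = fsum (\<lambda>\<gamma>. Xp n F (ext \<alpha> \<gamma>)) (Gm n F \<alpha>)"
    proof (induction k)
      case 0
      then have l: "length (qpart \<alpha>) = n" by simp
      then have "Gm n F \<alpha> = {[]}" by (auto simp: Gm_def)
      moreover have "Xp n F \<alpha> = mon (Mt \<alpha>)" using l by (simp add: Xp_def Eset_def)
      ultimately show ?case by (rule_tac ext) (simp add: fsum_def)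
    next
      case (Suc k)
      then have l: "length (qpart \<alpha>) < n" by simp
      let ?E = "Eset n F \<alpha>"
      have fE: "finite ?E" using assms(1) by (simp add: finite_Eset)
      have IH: "mon (Mt (ext \<alpha> [f])) = fsum (\<lambda>\<gamma>. Xp n F (ext (ext \<alpha> [f]) \<gamma>)) (Gm n F (ext \<alpha> [f]))"
        if f: "f \<in> ?E" for f
      proof (rule Suc.IH)
        show "k = n - length (qpart (ext \<alpha> [f]))" using Suc.prems by simp
        show "nft s r (ext \<alpha> [f])" using Suc.prems f by (intro nft_ext1) (auto simp: Eset_s)
        show "set (qpart (ext \<alpha> [f])) \<subseteq> F" using Suc.prems f l by (auto simp: Eset_def Fw_def)
        show "length (qpart (ext \<alpha> [f])) \<le> n" using l by simp
      qed
      have inj: "inj_on (\<lambda>(f, \<gamma>). f # \<gamma>) (SIGMA f:?E. Gm n F (ext \<alpha> [f]))"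
        by (auto simp: inj_on_def)
      have nn: "[] \<notin> (\<lambda>(f, \<gamma>). f # \<gamma>) ` (SIGMA f:?E. Gm n F (ext \<alpha> [f]))" by auto
      have fS: "finite (SIGMA f:?E. Gm n F (ext \<alpha> [f]))" using fE assms(1) by (simp add: finite_Gm)
      show ?case
      proof
        fix w0
        have "fsum (\<lambda>\<gamma>. Xp n F (ext \<alpha> \<gamma>)) (Gm n F \<alpha>) w0 =
            Xp n F \<alpha> w0 + (\<Sum>x\<in>(\<lambda>(f, \<gamma>). f # \<gamma>) ` (SIGMA f:?E. Gm n F (ext \<alpha> [f])). Xp n F (ext \<alpha> x) w0)"
          unfolding Gm_split[OF l] fsum_def using fS nn by (simp add: sum.insert)
        also have "\<dots> = Xp n F \<alpha> w0 + (\<Sum>(f,\<gamma>)\<in>(SIGMA f:?E. Gm n F (ext \<alpha> [f])). Xp n F (ext \<alpha> (f # \<gamma>)) w0)"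
          by (subst sum.reindex[OF inj]) (simp add: comp_def case_prod_unfold)
        also have "\<dots> = Xp n F \<alpha> w0 + (\<Sum>f\<in>?E. \<Sum>\<gamma>\<in>Gm n F (ext \<alpha> [f]). Xp n F (ext \<alpha> (f # \<gamma>)) w0)"
          using fE assms(1) by (simp add: sum.Sigma finite_Gm)
        also have "\<dots> = Xp n F \<alpha> w0 + (\<Sum>f\<in>?E. mon (Mt (ext \<alpha> [f])) w0)"
          using IH by (simp add: fsum_def)
        also have "\<dots> = mon (Mt \<alpha>) w0"
          by (simp add: Xp_def fsub_def fsum_def)
        finally show "mon (Mt \<alpha>) w0 = fsum (\<lambda>\<gamma>. Xp n F (ext \<alpha> \<gamma>)) (Gm n F \<alpha>) w0" by simp
      qed
    qed }
  then show ?thesis using assms by blast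
qed

end


context LT begin

lemma sc_add: "sc a (x + y) = sc a x + sc a y" using ia by (simp add: involutive_algebra_def)
lemma sc_mult: "sc (a * b) x = sc a (sc b x)" using ia by (simp add: involutive_algebra_def)
lemma sc_zero[simp]: "sc a 0 = 0" using sc_add[of a 0 0] by simp

lemma Fset_Xp: "finite F \<Longrightarrow> Xp n F \<alpha> \<in> Fset"
  unfolding Xp_def by (intro Fset_sub Fset_mon Fset_sum) (auto simp: finite_Eset)

lemma quad:
  assumes "finite F" "finite D" "\<And>d. d \<in> D \<Longrightarrow> good n F d"
  shows "t (fmul (fsum (\<lambda>d. fscal (c d) (Xp n F d)) D) (fstar ks (fsum (\<lambda>d. fscal (c d) (Xp n F d)) D)))
       = (\<Sum>d\<in>D. sc (c d * ks (c d)) (gram n F d))"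
proof -
  have e: "fmul (fsum (\<lambda>d. fscal (c d) (Xp n F d)) D) (fstar ks (fsum (\<lambda>d. fscal (c d) (Xp n F d)) D))
     = fsum (\<lambda>d. fsum (\<lambda>e. fscal (c d) (fscal (ks (c e)) (fmul (Xp n F d) (fstar ks (Xp n F e))))) D) D"
    apply (simp add: fstar_sum fstar_scal fmul_sum_left fmul_sum_right fmul_scal_left fmul_scal_right)
    apply (rule ext)
    apply (simp add: fsum_def fscal_def sum_distrib_left algebra_simps)
    apply (rule sum.swap)
    done
  have FF: "fmul (Xp n F d) (fstar ks (Xp n F e)) \<in> Fset" for d e
    using assms(1) by (intro Fset_mul Fset_Xp Fset_star)
  have "t (fsum (\<lambda>d. fsum (\<lambda>e. fscal (c d) (fscal (ks (c e)) (fmul (Xp n F d) (fstar ks (Xp n F e))))) D) D)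
      = (\<Sum>d\<in>D. \<Sum>e\<in>D. sc (c d) (sc (ks (c e)) (t (fmul (Xp n F d) (fstar ks (Xp n F e))))))"
    using assms(2) by (simp add: t_sum Fset_sum Fset_scal FF t_scal)
  also have "\<dots> = (\<Sum>d\<in>D. \<Sum>e\<in>D. if e = d then sc (c d) (sc (ks (c d)) (gram n F d)) else 0)"
    using assms by (intro sum.cong refl) (auto simp: Gram)
  also have "\<dots> = (\<Sum>d\<in>D. sc (c d * ks (c d)) (gram n F d))"
    using assms(2) by (simp add: sc_mult)
  finally show ?thesis unfolding e .
qed

lemma nft_ext: "nft s r \<alpha> \<Longrightarrow> vp s r (endt r \<alpha>) \<gamma> \<Longrightarrow> nft s r (ext \<alpha> \<gamma>)"
  by (cases \<alpha>) (auto simp: nfok_def vp_append endv_append)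

lemma z_expand: fixes z :: "('v,'e) gen list \<Rightarrow> 'k"
  shows "z \<in> Fset \<Longrightarrow> z = fsum (\<lambda>w. fscal (z w) (mon w)) {w. z w \<noteq> 0}"
proof
  fix x assume "z \<in> Fset"
  have "\<And>a. z a * (if x = a then 1 else 0) = (if a = x then z x else 0)" by auto
  then show "z x = fsum (\<lambda>w. fscal (z w) (mon w)) {w. z w \<noteq> 0} x"
    using \<open>z \<in> Fset\<close> by (simp add: fsum_def fscal_def mon_def Fset_def sum.delta)
qed

lemma decomp:
  fixes z :: "('v,'e) gen list \<Rightarrow> 'k"
  assumes z: "z \<in> Fset"
  shows "\<exists>n F D c. finite F \<and> finite D \<and> (\<forall>d\<in>D. good n F d) \<and>
            eqv s r z (fsum (\<lambda>d. fscal (c d) (Xp n F d)) D)"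
proof -
  let ?S = "{w. z w \<noteq> 0}"
  have fS: "finite ?S" and nS: "[] \<notin> ?S" using z by (auto simp: Fset_def)
  let ?S1 = "{w \<in> ?S. \<not> wz s r w TYPE('k)}"
  define nf where "nf w = (SOME \<alpha>. nft s r \<alpha> \<and> weq s r w (Mt \<alpha>) TYPE('k))" for w
  have nf: "nft s r (nf w) \<and> weq s r w (Mt (nf w)) TYPE('k)" if "w \<in> ?S1" for w
  proof -
    from that nS have "w \<noteq> []" by auto
    from normal_form[OF this, of s r "TYPE('k)"] that
    obtain a es u fs where "nfok s r a es u fs" "weq s r w (Mw a es u fs) TYPE('k)" by auto
    then have "nft s r (a, es, u, fs) \<and> weq s r w (Mt (a, es, u, fs)) TYPE('k)" by simp
    then show ?thesis unfolding nf_def by (rule someI)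
  qed
  have fS1: "finite ?S1" using fS by simp
  define F where "F = (\<Union>w\<in>?S1. set (qpart (nf w)))"
  define n where "n = Max (insert 0 ((\<lambda>w. length (qpart (nf w))) ` ?S1))"
  have fF: "finite F" unfolding F_def using fS1 by simp
  have gw: "set (qpart (nf w)) \<subseteq> F" "length (qpart (nf w)) \<le> n" if "w \<in> ?S1" for w
    using that fS1 by (auto simp: F_def n_def)
  define A where "A = (SIGMA w:?S1. Gm n F (nf w))"
  have fA: "finite A" unfolding A_def using fS1 fF by (simp add: finite_Gm)
  define g where "g = (\<lambda>(w, \<gamma>). ext (nf w) \<gamma>)"
  define D where "D = g ` A"
  define c where "c d = (\<Sum>x\<in>{x\<in>A. g x = d}. z (fst x))" for d
  have fD: "finite D" unfolding D_def using fA by simp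
  have good: "\<forall>d\<in>D. good n F d"
  proof
    fix d assume "d \<in> D"
    then obtain w \<gamma> where w: "w \<in> ?S1" and ga: "\<gamma> \<in> Gm n F (nf w)" and d: "d = ext (nf w) \<gamma>"
      by (auto simp: D_def A_def g_def)
    show "good n F d" unfolding d good_def
      using nf[OF w] gw[OF w] ga by (auto simp: Gm_def intro: nft_ext)
  qed
  have step1: "eqv s r z (fsum (\<lambda>w. if w \<in> ?S1 then fscal (z w) (mon (Mt (nf w))) else fzero) ?S)"
  proof -
    have "eqv s r (fsum (\<lambda>w. fscal (z w) (mon w)) ?S) (fsum (\<lambda>w. if w \<in> ?S1 then fscal (z w) (mon (Mt (nf w))) else fzero) ?S)"
    proof (rule eqv_sum)
      fix w assume w: "w \<in> ?S"
      show "eqv s r (fscal (z w) (mon w)) (if w \<in> ?S1 then fscal (z w) (mon (Mt (nf w))) else fzero)"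
      proof (cases "w \<in> ?S1")
        case True then show ?thesis using nf[OF True] by (simp add: weq_def eqv_scal)
      next
        case False
        then have "(mon w :: _ \<Rightarrow> 'k) \<in> lpa_ideal s r" using w by (simp add: wz_def)
        then have "fscal (z w) (mon w) \<in> lpa_ideal s r" by (rule lpa_ideal.scal)
        then show ?thesis using False w by (auto simp: eqv_zero_iff)
      qed
    qed
    then show ?thesis using z_expand[OF z] by simp
  qed
  have step2: "fsum (\<lambda>w. if w \<in> ?S1 then fscal (z w) (mon (Mt (nf w))) else fzero) ?S
      = fsum (\<lambda>d. fscal (c d) (Xp n F d)) D"
  proof
    fix w0
    have "fsum (\<lambda>w. if w \<in> ?S1 then fscal (z w) (mon (Mt (nf w))) else fzero) ?S w0
        = (\<Sum>w\<in>?S1. z w * mon (Mt (nf w)) w0)"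
    proof -
      have "fsum (\<lambda>w. if w \<in> ?S1 then fscal (z w) (mon (Mt (nf w))) else fzero) ?S w0
         = (\<Sum>a\<in>?S. if \<not> wz s r a TYPE('k) then z a * mon (Mt (nf a)) w0 else 0)"
        unfolding fsum_def by (rule sum.cong) (auto simp: fscal_def fzero_def)
      also have "\<dots> = (\<Sum>w\<in>?S1. z w * mon (Mt (nf w)) w0)"
        by (subst sum.inter_filter[OF fS, symmetric]) (simp add: conj_commute)
      finally show ?thesis .
    qed
    also have "\<dots> = (\<Sum>w\<in>?S1. z w * (\<Sum>\<gamma>\<in>Gm n F (nf w). Xp n F (ext (nf w) \<gamma>) w0))"
    proof (rule sum.cong[OF refl])
      fix w assume w: "w \<in> ?S1"
      have "mon (Mt (nf w)) = fsum (\<lambda>\<gamma>. Xp n F (ext (nf w) \<gamma>)) (Gm n F (nf w))"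
        using nf[OF w] gw[OF w] fF by (intro expand) auto
      then show "z w * mon (Mt (nf w)) w0 = z w * (\<Sum>\<gamma>\<in>Gm n F (nf w). Xp n F (ext (nf w) \<gamma>) w0)"
        by (simp add: fsum_def)
    qed
    also have "\<dots> = (\<Sum>x\<in>A. z (fst x) * Xp n F (g x) w0)"
      unfolding A_def g_def using fS1 fF
      by (simp add: sum_distrib_left sum.Sigma finite_Gm case_prod_unfold)
    also have "\<dots> = (\<Sum>d\<in>D. \<Sum>x\<in>{x\<in>A. g x = d}. z (fst x) * Xp n F (g x) w0)"
      unfolding D_def using fA by (rule sum.image_gen)
    also have "\<dots> = (\<Sum>d\<in>D. c d * Xp n F d w0)"
      unfolding c_def by (simp add: sum_distrib_right)
    also have "\<dots> = fsum (\<lambda>d. fscal (c d) (Xp n F d)) D w0"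
      by (simp add: fsum_def fscal_def)
    finally show "fsum (\<lambda>w. if w \<in> ?S1 then fscal (z w) (mon (Mt (nf w))) else fzero) ?S w0
        = fsum (\<lambda>d. fscal (c d) (Xp n F d)) D w0" .
  qed
  have "eqv s r z (fsum (\<lambda>d. fscal (c d) (Xp n F d)) D)" using step1 unfolding step2 .
  then show ?thesis using fF fD good by blast
qed

end


context LT begin

lemma ia_all:
  "sc a (x + y) = sc a x + sc a y" "sc (a + b) x = sc a x + sc b x" "sc (a * b) x = sc a (sc b x)"
  "sc 1 x = x" "sc a (x * y) = sc a x * y" "sc a (x * y) = x * sc a y"
  "rs (x + y) = rs x + rs y" "rs (x * y) = rs y * rs x" "rs (rs x) = x" "rs (sc a x) = sc (ks a) (rs x)"
  using ia unfolding involutive_algebra_def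
  apply -
  apply (elim conjE; fast)+
  done

lemma nonneg_0[simp]: "nonneg rs 0"
  unfolding nonneg_def by (rule exI[of _ "[]"]) simp

lemma nonneg_add: "nonneg rs x \<Longrightarrow> nonneg rs y \<Longrightarrow> nonneg rs (x + y)"
  unfolding nonneg_def by (metis map_append sum_list_append)

lemma nonneg_sum: "(\<And>a. a \<in> A \<Longrightarrow> nonneg rs (f a)) \<Longrightarrow> nonneg rs (sum f A)"
  by (induction A rule: infinite_finite_induct) (auto intro: nonneg_add)

lemma nonneg_sum_list: "(\<And>x. x \<in> set xs \<Longrightarrow> nonneg rs (f x)) \<Longrightarrow> nonneg rs (\<Sum>x\<leftarrow>xs. f x)"
  by (induction xs) (auto intro: nonneg_add)

lemma sc_sum_list: "sc a (\<Sum>x\<leftarrow>xs. f x) = (\<Sum>x\<leftarrow>xs. sc a (f x))"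
  by (induction xs) (auto simp: sc_add)

lemma sc_square: "sc (a * ks a) (z * rs z) = sc a z * rs (sc a z)"
proof -
  have "sc (a * ks a) (z * rs z) = sc a (sc (ks a) (z * rs z))" by (rule sc_mult)
  also have "sc (ks a) (z * rs z) = z * sc (ks a) (rs z)" by (rule ia_all(6))
  also have "sc a (z * sc (ks a) (rs z)) = sc a z * sc (ks a) (rs z)" by (rule ia_all(5))
  also have "sc (ks a) (rs z) = rs (sc a z)" by (rule ia_all(10)[symmetric])
  finally show ?thesis .
qed

lemma sum_sq_zero: "(\<forall>z\<in>set xs. z = 0) \<Longrightarrow> (\<Sum>z\<leftarrow>xs. z * rs z) = 0"
  by (induction xs) auto

lemma pd': "(\<Sum>z\<leftarrow>xs. z * rs z) = 0 \<Longrightarrow> z \<in> set xs \<Longrightarrow> z = 0"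
  using pd unfolding positive_definite_def by blast

lemma nonneg_sc: "nonneg rs x \<Longrightarrow> nonneg rs (sc (a * ks a) x)"
proof -
  assume "nonneg rs x"
  then obtain zs where x: "x = (\<Sum>z\<leftarrow>zs. z * rs z)" by (auto simp: nonneg_def)
  have "sc (a * ks a) x = (\<Sum>z\<leftarrow>map (sc a) zs. z * rs z)"
    unfolding x sc_sum_list by (simp add: sc_square comp_def)
  then show ?thesis unfolding nonneg_def by blast
qed

lemma pd2: "nonneg rs x \<Longrightarrow> nonneg rs y \<Longrightarrow> x + y = 0 \<Longrightarrow> x = 0"
proof -
  assume "nonneg rs x" "nonneg rs y" "x + y = 0"
  then obtain xs ys where x: "x = (\<Sum>z\<leftarrow>xs. z * rs z)" and y: "y = (\<Sum>z\<leftarrow>ys. z * rs z)"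
    by (auto simp: nonneg_def)
  have "(\<Sum>z\<leftarrow>xs @ ys. z * rs z) = 0" using \<open>x + y = 0\<close> x y by simp
  then have "\<forall>z\<in>set xs. z = 0" using pd'[OF \<open>(\<Sum>z\<leftarrow>xs @ ys. z * rs z) = 0\<close>] by simp
  then show "x = 0" unfolding x by (rule sum_sq_zero)
qed

lemma pd_sum: "finite A \<Longrightarrow> (\<And>a. a \<in> A \<Longrightarrow> nonneg rs (f a)) \<Longrightarrow> sum f A = 0 \<Longrightarrow> a \<in> A \<Longrightarrow> f a = 0"
proof (induction A rule: finite_induct)
  case empty then show ?case by simp
next
  case (insert x F)
  have nF: "nonneg rs (sum f F)" using insert by (intro nonneg_sum) auto
  have fx: "f x = 0" using pd2[of "f x" "sum f F"] insert nF by auto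
  then have "sum f F = 0" using insert by simp
  then show ?case using insert fx by auto
qed

lemma pd_sum_list: "(\<And>x. x \<in> set xs \<Longrightarrow> nonneg rs (f x)) \<Longrightarrow> (\<Sum>x\<leftarrow>xs. f x) = 0 \<Longrightarrow> x \<in> set xs \<Longrightarrow> f x = 0"
proof (induction xs)
  case Nil then show ?case by simp
next
  case (Cons y ys)
  have nF: "nonneg rs (\<Sum>x\<leftarrow>ys. f x)" using Cons by (intro nonneg_sum_list) auto
  have fy: "f y = 0" using pd2[of "f y" "\<Sum>x\<leftarrow>ys. f x"] Cons nF by auto
  then show ?case using Cons by auto
qed

lemma sc_cancel: assumes "positive rs x" "sc (a * ks a) x = 0" shows "a = 0"
proof (rule ccontr)
  assume a: "a \<noteq> 0"
  from assms(1) obtain zs where x: "x = (\<Sum>z\<leftarrow>zs. z * rs z)" and nz: "x \<noteq> 0"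
    by (auto simp: positive_def nonneg_def)
  have "(\<Sum>z\<leftarrow>map (sc a) zs. z * rs z) = 0"
    using assms(2) unfolding x sc_sum_list by (simp add: sc_square comp_def)
  then have "\<forall>z\<in>set zs. sc a z = 0" using pd' by (metis imageI set_map)
  then have "\<forall>z\<in>set zs. z = 0"
    using a by (metis ia_all(3,4) right_inverse sc_zero mult.commute)
  then have "x = 0" unfolding x by (induction zs) auto
  with nz show False by simp
qed

lemma t_vsum: "finite I \<Longrightarrow> t (fsub (mon [V v]) (fsum (\<lambda>e. mon [V (r e)]) I)) = tau v - (\<Sum>e\<in>I. tau (r e))"
  by (simp add: t_sub Fset_mon Fset_sum t_sum tau_def)

lemma CK2_Xp:
  assumes "regular s w" "nft s r d" "endt r d = w"
  shows "fsub (mon (Mt d) :: _ \<Rightarrow> 'k) (fsum (\<lambda>f. mon (Mt (ext d [f]))) {e. s e = w}) \<in> lpa_ideal s r"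
proof -
  obtain a es u fs where d: "d = (a, es, u, fs)" by (cases d) auto
  let ?x = "pth a es" and ?y = "wstar (pth u fs)"
  have ew: "endv r a es = w" using assms d by simp
  have va: "vp s r a es" using assms d by (simp add: nfok_def)
  have R: "fmul (mon ?x :: _ \<Rightarrow> 'k) (fmul (fsub (mon [V w]) (fsum (\<lambda>e. mon [Ed e, Gh e]) {e. s e = w})) (mon ?y)) \<in> lpa_ideal s r"
    by (intro I_mon_left I_mon_right lpa_ideal.rel relCK2 assms(1))
  have e: "fmul (mon ?x :: _ \<Rightarrow> 'k) (fmul (fsub (mon [V w]) (fsum (\<lambda>e. mon [Ed e, Gh e]) {e. s e = w})) (mon ?y))
     = fsub (mon (?x @ [V w] @ ?y)) (fsum (\<lambda>f. mon (Mt (ext d [f]))) {e. s e = w})"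
    by (simp add: d fmul_sub_left fmul_sub_right fmul_sum_left fmul_sum_right fmul_mon_mon Mw_def pth_def wstar_append)
  have "weq s r (?x @ [V w] @ ?y) (?x @ ?y) TYPE('k)"
    using weq_ctx[OF pth_end[OF va], where a="[]" and b="?y"] ew by simp
  then have "eqv s r (mon (?x @ [V w] @ ?y) :: _ \<Rightarrow> 'k) (mon (Mt d))" by (simp add: weq_def d Mw_def)
  then have "eqv s r (mon (Mt d) :: _ \<Rightarrow> 'k) (mon (?x @ [V w] @ ?y))" by (rule eqv_sym)
  then have h1: "eqv s r (fsub (mon (Mt d) :: _ \<Rightarrow> 'k) (fsum (\<lambda>f. mon (Mt (ext d [f]))) {e. s e = w}))
      (fsub (mon (?x @ [V w] @ ?y)) (fsum (\<lambda>f. mon (Mt (ext d [f]))) {e. s e = w}))"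
    by (rule eqv_sub) simp
  have h2: "eqv s r (fsub (mon (?x @ [V w] @ ?y) :: _ \<Rightarrow> 'k) (fsum (\<lambda>f. mon (Mt (ext d [f]))) {e. s e = w})) fzero"
    using R unfolding e by (simp add: eqv_zero_iff)
  from eqv_trans[OF h1 h2] show ?thesis by (simp add: eqv_zero_iff)
qed

context
  assumes HP: "\<forall>v I. finite I \<longrightarrow> I \<subseteq> {e. s e = v} \<longrightarrow>
              nonneg rs (t (fsub (mon [V v]) (fsum (\<lambda>e. mon [V (r e)]) I)))"
    and HF: "\<forall>v. positive rs (t (mon [V v]))"
begin

lemma gram_pos:
  assumes "finite F" "good n F d"
  shows "nonneg rs (gram n F d) \<and> (gram n F d = 0 \<longrightarrow> Xp n F d \<in> lpa_ideal s r)"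
proof -
  let ?w = "endt r d" and ?E = "Eset n F d"
  have fE: "finite ?E" using assms by (simp add: finite_Eset)
  have Es: "?E \<subseteq> {e. s e = ?w}" by (auto simp: Eset_s)
  have g: "gram n F d = t (fsub (mon [V ?w]) (fsum (\<lambda>e. mon [V (r e)]) ?E))"
    using fE by (simp add: gram_def t_vsum)
  have nn: "nonneg rs (gram n F d)" unfolding g using HP fE Es by blast
  have "Xp n F d \<in> lpa_ideal s r" if z: "gram n F d = 0"
  proof -
    have all: "?E = {e. s e = ?w}"
    proof (rule ccontr)
      assume "?E \<noteq> {e. s e = ?w}"
      with Es obtain f0 where f0: "s f0 = ?w" "f0 \<notin> ?E" by auto
      let ?E' = "insert f0 ?E"
      have "gram n F d = (tau ?w - (\<Sum>e\<in>?E'. tau (r e))) + tau (r f0)"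
        using fE f0 by (simp add: gram_def)
      moreover have "nonneg rs (tau ?w - (\<Sum>e\<in>?E'. tau (r e)))"
        using HP[rule_format, of ?E' ?w] fE f0 Es by (simp add: t_vsum)
      moreover have "positive rs (tau (r f0))" using HF by (simp add: tau_def)
      ultimately have "tau (r f0) + (tau ?w - (\<Sum>e\<in>?E'. tau (r e))) = 0"
        "nonneg rs (tau (r f0))" "nonneg rs (tau ?w - (\<Sum>e\<in>?E'. tau (r e)))"
        using z by (simp_all add: positive_def add.commute)
      then have "tau (r f0) = 0" by (intro pd2[of "tau (r f0)" "tau ?w - (\<Sum>e\<in>?E'. tau (r e))"])
      then show False using HF by (simp add: tau_def positive_def)
    qed
    have ne: "?E \<noteq> {}"
    proof
      assume "?E = {}"
      then have "tau ?w = 0" using z by (simp add: gram_def)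
      then show False using HF by (simp add: tau_def positive_def)
    qed
    have reg: "regular s ?w" using all ne fE by (simp add: regular_def)
    have "Xp n F d = fsub (mon (Mt d)) (fsum (\<lambda>f. mon (Mt (ext d [f]))) {e. s e = ?w})"
      unfolding Xp_def all ..
    then show ?thesis using CK2_Xp[OF reg] assms by (simp add: good_def)
  qed
  with nn show ?thesis by blast
qed

lemma key:
  fixes z :: "('v,'e) gen list \<Rightarrow> 'k"
  assumes z: "z \<in> Fset"
  shows "nonneg rs (t (fmul z (fstar ks z))) \<and> (t (fmul z (fstar ks z)) = 0 \<longrightarrow> z \<in> lpa_ideal s r)"
proof -
  from decomp[OF z] obtain n F D c where fF: "finite F" and fD: "finite D" and gd: "\<forall>d\<in>D. good n F d"
    and eq: "eqv s r z (fsum (\<lambda>d. fscal (c d) (Xp n F d)) D)" by blast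
  let ?Z = "fsum (\<lambda>d. fscal (c d) (Xp n F d)) D"
  have ZF: "?Z \<in> Fset" using fD fF by (intro Fset_sum Fset_scal Fset_Xp)
  have "eqv s r (fmul z (fstar ks z)) (fmul ?Z (fstar ks ?Z))"
    using eq eqv_star[OF eq] z ZF by (intro eqv_mul) (simp_all add: Fset_star)
  then have "t (fmul z (fstar ks z)) = t (fmul ?Z (fstar ks ?Z))"
    using z ZF by (intro t_eqv) (simp_all add: Fset_mul Fset_star)
  also have "\<dots> = (\<Sum>d\<in>D. sc (c d * ks (c d)) (gram n F d))"
    using quad fF fD gd by blast
  finally have tz: "t (fmul z (fstar ks z)) = (\<Sum>d\<in>D. sc (c d * ks (c d)) (gram n F d))" .
  have nn: "\<And>d. d \<in> D \<Longrightarrow> nonneg rs (sc (c d * ks (c d)) (gram n F d))"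
    using gram_pos gd fF by (intro nonneg_sc) auto
  have "z \<in> lpa_ideal s r" if "t (fmul z (fstar ks z)) = 0"
  proof -
    have each: "\<And>d. d \<in> D \<Longrightarrow> sc (c d * ks (c d)) (gram n F d) = 0"
      using pd_sum[OF fD nn] that tz by auto
    have "fscal (c d) (Xp n F d) \<in> lpa_ideal s r" if d: "d \<in> D" for d
    proof (cases "gram n F d = 0")
      case True
      then have "Xp n F d \<in> lpa_ideal s r" using gram_pos[OF fF] gd d by blast
      then show ?thesis by (rule lpa_ideal.scal)
    next
      case False
      then have "positive rs (gram n F d)" using gram_pos[OF fF] gd d by (simp add: positive_def)
      then have "c d = 0" using sc_cancel each d by blast
      moreover have "fscal 0 x = fzero" for x :: "('v,'e) gen list \<Rightarrow> 'k"
        by (rule ext) (simp add: fscal_def fzero_def)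
      ultimately show ?thesis by (simp add: lpa_ideal.zero)
    qed
    then have "?Z \<in> lpa_ideal s r" by (intro I_sum)
    then have "eqv s r ?Z fzero" by (simp add: eqv_zero_iff)
    from eqv_trans[OF eq this] show ?thesis by (simp add: eqv_zero_iff)
  qed
  then show ?thesis using tz nn by (auto intro: nonneg_sum)
qed

end

end


section \<open>Boundary path representation: vertices are nonzero\<close>

datatype ('v, 'e) bp = Fin 'v "'e list" | Inf "nat \<Rightarrow> 'e"

fun okp :: "('e \<Rightarrow> 'v) \<Rightarrow> ('e \<Rightarrow> 'v) \<Rightarrow> 'v \<Rightarrow> 'e list \<Rightarrow> bool" where
  "okp s r v [] = (\<not> regular s v)"
| "okp s r v (e # es) = (s e = v \<and> okp s r (r e) es)"

fun Bp :: "('e \<Rightarrow> 'v) \<Rightarrow> ('e \<Rightarrow> 'v) \<Rightarrow> ('v, 'e) bp \<Rightarrow> bool" where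
  "Bp s r (Fin v es) = okp s r v es"
| "Bp s r (Inf f) = (\<forall>n. r (f n) = s (f (Suc n)))"

fun src :: "('e \<Rightarrow> 'v) \<Rightarrow> ('v, 'e) bp \<Rightarrow> 'v" where
  "src s (Fin v es) = v"
| "src s (Inf f) = s (f 0)"

fun bcons :: "('e \<Rightarrow> 'v) \<Rightarrow> 'e \<Rightarrow> ('v, 'e) bp \<Rightarrow> ('v, 'e) bp" where
  "bcons s e (Fin v es) = Fin (s e) (e # es)"
| "bcons s e (Inf f) = Inf (case_nat e f)"

fun actg :: "('e \<Rightarrow> 'v) \<Rightarrow> ('e \<Rightarrow> 'v) \<Rightarrow> ('v, 'e) gen \<Rightarrow> ('v, 'e) bp \<Rightarrow> ('v, 'e) bp option" where
  "actg s r (V u) x = (if src s x = u then Some x else None)"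
| "actg s r (Ed e) x = (if src s x = r e then Some (bcons s e x) else None)"
| "actg s r (Gh e) (Fin v []) = None"
| "actg s r (Gh e) (Fin v (e' # es)) = (if e' = e then Some (Fin (r e) es) else None)"
| "actg s r (Gh e) (Inf f) = (if f 0 = e then Some (Inf (\<lambda>n. f (Suc n))) else None)"

fun act :: "('e \<Rightarrow> 'v) \<Rightarrow> ('e \<Rightarrow> 'v) \<Rightarrow> ('v, 'e) gen list \<Rightarrow> ('v, 'e) bp \<Rightarrow> ('v, 'e) bp option" where
  "act s r [] x = Some x"
| "act s r (g # w) x = Option.bind (act s r w x) (actg s r g)"

lemma act_append: "act s r (u @ w) x = Option.bind (act s r w x) (act s r u)"
  by (induction u) (auto simp: Option.bind_assoc)

lemma act_single[simp]: "act s r [g] x = actg s r g x"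
  by simp

lemma okp_src: "okp s r v (e # es) \<Longrightarrow> v = s e" by simp

lemma actg_B: "Bp s r x \<Longrightarrow> actg s r g x = Some y \<Longrightarrow> Bp s r y"
proof (cases g)
  case (V u) then show "Bp s r x \<Longrightarrow> actg s r g x = Some y \<Longrightarrow> Bp s r y" by (auto split: if_splits)
next
  case (Ed e)
  then show "Bp s r x \<Longrightarrow> actg s r g x = Some y \<Longrightarrow> Bp s r y"
    by (cases x) (auto split: if_splits nat.splits)
next
  case (Gh e)
  then show "Bp s r x \<Longrightarrow> actg s r g x = Some y \<Longrightarrow> Bp s r y"
  proof (cases x)
    case (Fin v es) then show "Bp s r x \<Longrightarrow> actg s r g x = Some y \<Longrightarrow> Bp s r y"
      using Gh by (cases es) (auto split: if_splits)
  qed (auto split: if_splits)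
qed

lemma act_B: "Bp s r x \<Longrightarrow> act s r w x = Some y \<Longrightarrow> Bp s r y"
proof (induction w arbitrary: y)
  case Nil then show ?case by simp
next
  case (Cons g w)
  then obtain z where "act s r w x = Some z" "actg s r g z = Some y" by (auto split: Option.bind_splits)
  then show ?case using Cons actg_B by blast
qed

lemma actg_inj: "Bp s r x \<Longrightarrow> Bp s r x' \<Longrightarrow> actg s r g x = Some y \<Longrightarrow> actg s r g x' = Some y \<Longrightarrow> x = x'"
proof (cases g)
  case (V u) then show "Bp s r x \<Longrightarrow> Bp s r x' \<Longrightarrow> actg s r g x = Some y \<Longrightarrow> actg s r g x' = Some y \<Longrightarrow> x = x'"
    by (auto split: if_splits)
next
  case (Ed e)
  show "Bp s r x \<Longrightarrow> Bp s r x' \<Longrightarrow> actg s r g x = Some y \<Longrightarrow> actg s r g x' = Some y \<Longrightarrow> x = x'"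
    using Ed
  proof (cases x; cases x')
    fix f f' assume "x = Inf f" "x' = Inf f'" "actg s r g x = Some y" "actg s r g x' = Some y"
    then have "case_nat e f = case_nat e f'" using Ed by (auto split: if_splits)
    then have "f = f'" by (metis nat.case(2) ext)
    then show "x = x'" using \<open>x = Inf f\<close> \<open>x' = Inf f'\<close> by simp
  qed (auto split: if_splits)
next
  case (Gh e)
  show "Bp s r x \<Longrightarrow> Bp s r x' \<Longrightarrow> actg s r g x = Some y \<Longrightarrow> actg s r g x' = Some y \<Longrightarrow> x = x'"
  proof (cases x; cases x')
    fix v es v' es' assume x: "x = Fin v es" "x' = Fin v' es'"
    assume "Bp s r x" "Bp s r x'" "actg s r g x = Some y" "actg s r g x' = Some y"
    then show "x = x'" using x Gh by (cases es; cases es') (auto split: if_splits)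
  next
    fix f f' assume x: "x = Inf f" "x' = Inf f'"
    assume "actg s r g x = Some y" "actg s r g x' = Some y"
    then have "f 0 = e" "f' 0 = e" "(\<lambda>n. f (Suc n)) = (\<lambda>n. f' (Suc n))" using x Gh by (auto split: if_splits)
    then have "f = f'" by (metis (full_types) ext not0_implies_Suc)
    then show "x = x'" using x by simp
  next
    fix v es f assume "x = Fin v es" "x' = Inf f" "actg s r g x = Some y" "actg s r g x' = Some y"
    then show "x = x'" using Gh by (cases es) (auto split: if_splits)
  next
    fix v es f assume "x' = Fin v es" "x = Inf f" "actg s r g x = Some y" "actg s r g x' = Some y"
    then show "x = x'" using Gh by (cases es) (auto split: if_splits)
  qed
qed

lemma act_inj: "Bp s r x \<Longrightarrow> Bp s r x' \<Longrightarrow> act s r w x = Some y \<Longrightarrow> act s r w x' = Some y \<Longrightarrow> x = x'"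
proof (induction w arbitrary: y)
  case Nil then show ?case by simp
next
  case (Cons g w)
  then obtain z z' where "act s r w x = Some z" "actg s r g z = Some y"
     "act s r w x' = Some z'" "actg s r g z' = Some y" by (auto split: Option.bind_splits)
  moreover have "Bp s r z" "Bp s r z'" using calculation Cons.prems act_B by blast+
  ultimately have "z = z'" using actg_inj by blast
  then show ?case using Cons \<open>act s r w x = Some z\<close> \<open>act s r w x' = Some z'\<close> by blast
qed


definition Phi :: "('e \<Rightarrow> 'v) \<Rightarrow> ('e \<Rightarrow> 'v) \<Rightarrow> ('v, 'e) bp \<Rightarrow> ('v, 'e) bp \<Rightarrow> (('v, 'e) gen list \<Rightarrow> 'k::field) \<Rightarrow> 'k" where
  "Phi s r x y h = (\<Sum>w\<in>{w. h w \<noteq> 0}. if act s r w x = Some y then h w else 0)"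

lemma Phi_W: "finite W \<Longrightarrow> {w. h w \<noteq> 0} \<subseteq> W \<Longrightarrow> Phi s r x y h = (\<Sum>w\<in>W. if act s r w x = Some y then h w else 0)"
  unfolding Phi_def by (rule sum.mono_neutral_left) auto

abbreviation fin :: "(('v, 'e) gen list \<Rightarrow> 'k::field) \<Rightarrow> bool" where "fin h \<equiv> finite {w. h w \<noteq> 0}"

lemma fin_add: "fin h1 \<Longrightarrow> fin h2 \<Longrightarrow> fin (fadd h1 h2)"
  by (rule finite_subset[of _ "{w. h1 w \<noteq> 0} \<union> {w. h2 w \<noteq> 0}"]) (auto simp: fadd_def)
lemma fin_scal: "fin h \<Longrightarrow> fin (fscal a h)"
  by (rule finite_subset[of _ "{w. h w \<noteq> 0}"]) (auto simp: fscal_def)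

lemma Phi_add: assumes "fin h1" "fin h2" shows "Phi s r x y (fadd h1 h2) = Phi s r x y h1 + Phi s r x y h2"
proof -
  let ?W = "{w. h1 w \<noteq> 0} \<union> {w. h2 w \<noteq> 0}"
  have "Phi s r x y (fadd h1 h2) = (\<Sum>w\<in>?W. if act s r w x = Some y then fadd h1 h2 w else 0)"
    using assms by (intro Phi_W) (auto simp: fadd_def)
  also have "\<dots> = (\<Sum>w\<in>?W. if act s r w x = Some y then h1 w else 0) + (\<Sum>w\<in>?W. if act s r w x = Some y then h2 w else 0)"
    by (simp add: fadd_def sum.distrib[symmetric] if_distrib cong: if_cong)
  also have "\<dots> = Phi s r x y h1 + Phi s r x y h2"
  proof -
    have "Phi s r x y h1 = (\<Sum>w\<in>?W. if act s r w x = Some y then h1 w else 0)"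
      using assms by (intro Phi_W) auto
    moreover have "Phi s r x y h2 = (\<Sum>w\<in>?W. if act s r w x = Some y then h2 w else 0)"
      using assms by (intro Phi_W) auto
    ultimately show ?thesis by simp
  qed
  finally show ?thesis .
qed

lemma Phi_scal: assumes "fin h" shows "Phi s r x y (fscal a h) = a * Phi s r x y h"
proof -
  have "Phi s r x y (fscal a h) = (\<Sum>w\<in>{w. h w \<noteq> 0}. if act s r w x = Some y then fscal a h w else 0)"
    using assms by (intro Phi_W) (auto simp: fscal_def)
  also have "\<dots> = a * Phi s r x y h"
    unfolding Phi_def by (simp add: sum_distrib_left fscal_def if_distrib cong: if_cong)
  finally show ?thesis .
qed

lemma Phi_mon: "Phi s r x y (mon u :: _ \<Rightarrow> 'k::field) = (if act s r u x = Some y then 1 else 0)"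
proof -
  have "Phi s r x y (mon u :: _ \<Rightarrow> 'k::field) = (\<Sum>w\<in>{u}. if act s r w x = Some y then mon u w else 0)"
    by (intro Phi_W) (auto simp: mon_def)
  then show ?thesis by (simp add: mon_def)
qed

lemma Phi_zero: "Phi s r x y fzero = 0" by (simp add: Phi_def fzero_def)

lemma Phi_sub: "fin h1 \<Longrightarrow> fin h2 \<Longrightarrow> Phi s r x y (fsub h1 h2) = Phi s r x y h1 - Phi s r x y h2"
  using Phi_add[of h1 "fscal (-1) h2"] Phi_scal[of h2 s r x y "-1"] fin_scal[of h2 "-1"]
  by (simp add: fsub_as_add)

lemma fin_sum: "finite A \<Longrightarrow> (\<And>a. a \<in> A \<Longrightarrow> fin (g a)) \<Longrightarrow> fin (fsum g A)"
proof (induction A rule: finite_induct)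
  case empty then show ?case by (simp add: fzero_def)
next
  case (insert a A) then show ?case by (simp add: fsum_insert fin_add)
qed

lemma Phi_sum: "finite A \<Longrightarrow> (\<And>a. a \<in> A \<Longrightarrow> fin (g a)) \<Longrightarrow> Phi s r x y (fsum g A) = (\<Sum>a\<in>A. Phi s r x y (g a))"
proof (induction A rule: finite_induct)
  case empty then show ?case by (simp add: Phi_zero)
next
  case (insert a A) then show ?case by (simp add: fsum_insert Phi_add fin_sum)
qed

lemma fin_mon: "fin (mon u)" by (rule finite_subset[of _ "{u}"]) (auto simp: mon_def)

lemma fin_fzero: "fin fzero" by (simp add: fzero_def)


lemma fmul_mon_left_app: "fmul (mon u) h (u @ w) = h w"
  by (simp add: fmul_mon_left)

lemma fmul_mon_left_supp: "fmul (mon u) h w \<noteq> 0 \<Longrightarrow> \<exists>w'. w = u @ w' \<and> h w' \<noteq> 0"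
  by (auto simp: fmul_mon_left split: if_splits intro!: exI[of _ "drop (length u) w"]) (metis append_take_drop_id)

lemma fmul_mon_right_app: "fmul h (mon u) (w @ u) = h w"
proof -
  have "fmul h (mon u) (w @ u) = (\<Sum>i\<in>{0..length (w @ u)}. if i = length w then h w else 0)"
    unfolding fmul_def mon_def
  proof (rule sum.cong[OF refl])
    fix i assume i: "i \<in> {0..length (w @ u)}"
    show "h (take i (w @ u)) * (if drop i (w @ u) = u then 1 else 0) = (if i = length w then h w else 0)"
    proof (cases "drop i (w @ u) = u")
      case True
      then have "length (drop i (w @ u)) = length u" by simp
      then have "i = length w" using i by auto
      then show ?thesis by simp
    qed auto
  qed
  then show ?thesis by simp
qed

lemma fmul_mon_right_supp: "fmul h (mon u) w \<noteq> 0 \<Longrightarrow> \<exists>w'. w = w' @ u \<and> h w' \<noteq> 0"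
proof -
  assume "fmul h (mon u) w \<noteq> 0"
  then obtain i where "h (take i w) * mon u (drop i w) \<noteq> 0" unfolding fmul_def
    by (auto elim: sum.not_neutral_contains_not_neutral)
  then have "drop i w = u" "h (take i w) \<noteq> 0" by (auto simp: mon_def split: if_splits)
  then show ?thesis by (metis append_take_drop_id)
qed

lemma Phi_mon_left: assumes "fin h"
  shows "Phi s r x y (fmul (mon u) h) = (\<Sum>w\<in>{w. h w \<noteq> 0}. if act s r (u @ w) x = Some y then h w else 0)"
proof -
  let ?W = "(\<lambda>w. u @ w) ` {w. h w \<noteq> 0}"
  have "Phi s r x y (fmul (mon u) h) = (\<Sum>w\<in>?W. if act s r w x = Some y then fmul (mon u) h w else 0)"
    using assms by (intro Phi_W) (auto dest!: fmul_mon_left_supp)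
  also have "\<dots> = (\<Sum>w\<in>{w. h w \<noteq> 0}. if act s r (u @ w) x = Some y then h w else 0)"
    by (subst sum.reindex) (auto simp: inj_on_def fmul_mon_left_app cong: if_cong)
  finally show ?thesis .
qed

lemma Phi_mon_right: assumes "fin h"
  shows "Phi s r x y (fmul h (mon u)) = (\<Sum>w\<in>{w. h w \<noteq> 0}. if act s r (w @ u) x = Some y then h w else 0)"
proof -
  let ?W = "(\<lambda>w. w @ u) ` {w. h w \<noteq> 0}"
  have "Phi s r x y (fmul h (mon u)) = (\<Sum>w\<in>?W. if act s r w x = Some y then fmul h (mon u) w else 0)"
    using assms by (intro Phi_W) (auto dest!: fmul_mon_right_supp)
  also have "\<dots> = (\<Sum>w\<in>{w. h w \<noteq> 0}. if act s r (w @ u) x = Some y then h w else 0)"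
    by (subst sum.reindex) (auto simp: inj_on_def fmul_mon_right_app cong: if_cong)
  finally show ?thesis .
qed

definition Ginv :: "('e \<Rightarrow> 'v) \<Rightarrow> ('e \<Rightarrow> 'v) \<Rightarrow> (('v, 'e) gen list \<Rightarrow> 'k::field) \<Rightarrow> bool" where
  "Ginv s r h \<longleftrightarrow> fin h \<and> (\<forall>x y. Bp s r x \<longrightarrow> Phi s r x y h = 0)"

lemma Ginv_mon_left: assumes "Ginv s r h" shows "Ginv s r (fmul (mon u) h)"
proof -
  have fh: "fin h" using assms by (simp add: Ginv_def)
  have fin: "fin (fmul (mon u) h)"
    by (rule finite_subset[of _ "(\<lambda>w. u @ w) ` {w. h w \<noteq> 0}"]) (use fh in \<open>auto dest!: fmul_mon_left_supp\<close>)
  have "Phi s r x y (fmul (mon u) h) = 0" if x: "Bp s r x" for x y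
  proof (cases "\<exists>w1. act s r (u @ w1) x = Some y")
    case True
    then obtain w1 z0 where z0: "act s r w1 x = Some z0" "act s r u z0 = Some y"
      by (auto simp: act_append split: Option.bind_splits)
    have B0: "Bp s r z0" using act_B[OF x z0(1)] .
    have eq: "act s r (u @ w) x = Some y \<longleftrightarrow> act s r w x = Some z0" for w
    proof
      assume "act s r (u @ w) x = Some y"
      then obtain z where z: "act s r w x = Some z" "act s r u z = Some y"
        by (auto simp: act_append split: Option.bind_splits)
      have "Bp s r z" using act_B[OF x z(1)] .
      then have "z = z0" using act_inj[OF _ B0 z(2) z0(2)] by simp
      then show "act s r w x = Some z0" using z by simp
    next
      assume "act s r w x = Some z0" then show "act s r (u @ w) x = Some y" using z0 by (simp add: act_append)
    qed
    have "Phi s r x y (fmul (mon u) h) = Phi s r x z0 h"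
      by (simp only: Phi_mon_left[OF fh]) (simp add: Phi_def eq)
    then show ?thesis using assms x by (simp add: Ginv_def)
  next
    case False
    then show ?thesis by (simp add: Phi_mon_left[OF fh])
  qed
  with fin show ?thesis by (simp add: Ginv_def)
qed

lemma Ginv_mon_right: assumes "Ginv s r h" shows "Ginv s r (fmul h (mon u))"
proof -
  have fh: "fin h" using assms by (simp add: Ginv_def)
  have fin: "fin (fmul h (mon u))"
    by (rule finite_subset[of _ "(\<lambda>w. w @ u) ` {w. h w \<noteq> 0}"]) (use fh in \<open>auto dest!: fmul_mon_right_supp\<close>)
  have "Phi s r x y (fmul h (mon u)) = 0" if x: "Bp s r x" for x y
  proof (cases "act s r u x")
    case None
    then show ?thesis by (simp add: Phi_mon_right[OF fh] act_append)
  next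
    case (Some x')
    have "Bp s r x'" using act_B[OF x Some] .
    moreover have "Phi s r x y (fmul h (mon u)) = Phi s r x' y h"
      by (simp only: Phi_mon_right[OF fh]) (simp add: Phi_def act_append Some)
    ultimately show ?thesis using assms by (simp add: Ginv_def)
  qed
  with fin show ?thesis by (simp add: Ginv_def)
qed

lemma Ginv_add: "Ginv s r h1 \<Longrightarrow> Ginv s r h2 \<Longrightarrow> Ginv s r (fadd h1 h2)"
  by (simp add: Ginv_def fin_add Phi_add)
lemma Ginv_scal: "Ginv s r h \<Longrightarrow> Ginv s r (fscal a h)"
  by (simp add: Ginv_def fin_scal Phi_scal)
lemma Ginv_sum: "finite A \<Longrightarrow> (\<And>a. a \<in> A \<Longrightarrow> Ginv s r (g a)) \<Longrightarrow> Ginv s r (fsum g A)"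
  by (simp add: Ginv_def fin_sum Phi_sum)

lemma expand_gen: fixes z :: "('v,'e) gen list \<Rightarrow> 'k::field"
  shows "fin z \<Longrightarrow> z = fsum (\<lambda>w. fscal (z w) (mon w)) {w. z w \<noteq> 0}"
proof
  fix x assume "fin z"
  have "\<And>a. z a * (if x = a then 1 else 0) = (if a = x then z x else 0)" by auto
  then show "z x = fsum (\<lambda>w. fscal (z w) (mon w)) {w. z w \<noteq> 0} x"
    using \<open>fin z\<close> by (simp add: fsum_def fscal_def mon_def sum.delta)
qed

lemma Ginv_mul_left: "Ginv s r h \<Longrightarrow> f \<in> Fset \<Longrightarrow> Ginv s r (fmul f h)"
proof -
  assume h: "Ginv s r h" and f: "f \<in> Fset"
  then have ff: "fin f" by (simp add: Fset_def)
  have "fmul f h = fsum (\<lambda>u. fscal (f u) (fmul (mon u) h)) {w. f w \<noteq> 0}"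
    by (subst expand_gen[OF ff]) (simp add: fmul_sum_left fmul_scal_left)
  then show ?thesis using ff h by (simp add: Ginv_sum Ginv_scal Ginv_mon_left)
qed

lemma Ginv_mul_right: "Ginv s r h \<Longrightarrow> f \<in> Fset \<Longrightarrow> Ginv s r (fmul h f)"
proof -
  assume h: "Ginv s r h" and f: "f \<in> Fset"
  then have ff: "fin f" by (simp add: Fset_def)
  have "fmul h f = fsum (\<lambda>u. fscal (f u) (fmul h (mon u))) {w. f w \<noteq> 0}"
    by (subst expand_gen[OF ff]) (simp add: fmul_sum_right fmul_scal_right)
  then show ?thesis using ff h by (simp add: Ginv_sum Ginv_scal Ginv_mon_right)
qed


fun fe :: "('v, 'e) bp \<Rightarrow> 'e option" where
  "fe (Fin v []) = None"
| "fe (Fin v (e # es)) = Some e"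
| "fe (Inf f) = Some (f 0)"

lemma src_bcons[simp]: "src s (bcons s e x) = s e"
  by (cases x) auto

lemma act_EG: "Bp s r x \<Longrightarrow> act s r [Ed e, Gh e] x = (if fe x = Some e then Some x else None)"
proof (cases x)
  case (Fin v es)
  then show "Bp s r x \<Longrightarrow> ?thesis" by (cases es) auto
next
  case (Inf f)
  assume B: "Bp s r x"
  show ?thesis
  proof (cases "f 0 = e")
    case True
    have "case_nat e (\<lambda>n. f (Suc n)) = f" using True by (rule_tac ext) (simp split: nat.splits)
    then show ?thesis using Inf B True by auto
  qed (use Inf in auto)
qed

lemma fe_src: "Bp s r x \<Longrightarrow> fe x = Some e \<Longrightarrow> s e = src s x"
  by (cases x rule: fe.cases) auto

lemma fe_none: "Bp s r x \<Longrightarrow> fe x = None \<Longrightarrow> \<not> regular s (src s x)"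
  by (cases x rule: fe.cases) auto

lemma act_VG: "Bp s r x \<Longrightarrow> act s r [V (r e), Gh e] x = act s r [Gh e] x"
  by (cases x rule: fe.cases) (auto split: if_splits)

lemma act_GV: "Bp s r x \<Longrightarrow> act s r [Gh e, V (s e)] x = act s r [Gh e] x"
  by (cases x rule: fe.cases) (auto split: if_splits)

lemma act_GE: "Bp s r x \<Longrightarrow> act s r [Gh e, Ed f] x = (if e = f then act s r [V (r e)] x else None)"
proof (cases x)
  case (Fin v es) then show "Bp s r x \<Longrightarrow> ?thesis" by auto
next
  case (Inf g)
  have "(\<lambda>n. case_nat f g (Suc n)) = g" by simp
  then show "Bp s r x \<Longrightarrow> ?thesis" using Inf by auto
qed

lemma Phi_sub_mon: "Phi s r x y (fsub (mon a) (mon b) :: _ \<Rightarrow> 'k::field) = (if act s r a x = Some y then 1 else 0) - (if act s r b x = Some y then 1 else 0)"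
  by (simp add: Phi_sub fin_mon Phi_mon)

lemma rels_Ginv: assumes "h \<in> lpa_rels s r" shows "Ginv s r (h :: _ \<Rightarrow> 'k::field)"
proof -
  have fin: "fin h" using rels_Fset[OF assms] by (simp add: Fset_def)
  have "Phi s r x y h = 0" if B: "Bp s r x" for x y
  proof -
    from assms consider (V) v w where "h = fsub (mon [V v, V w]) (if v = w then mon [V v] else fzero)"
      | (E1) e where "h = fsub (mon [V (s e), Ed e]) (mon [Ed e])"
      | (E1') e where "h = fsub (mon [Ed e, V (r e)]) (mon [Ed e])"
      | (E2) e where "h = fsub (mon [V (r e), Gh e]) (mon [Gh e])"
      | (E2') e where "h = fsub (mon [Gh e, V (s e)]) (mon [Gh e])"
      | (CK1) e f where "h = fsub (mon [Gh e, Ed f]) (if e = f then mon [V (r e)] else fzero)"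
      | (CK2) v where "h = fsub (mon [V v]) (fsum (\<lambda>e. mon [Ed e, Gh e]) {e. s e = v})" "regular s v"
      unfolding lpa_rels_def by blast
    then show ?thesis
    proof cases
      case (V v w)
      show ?thesis
      proof (cases "v = w")
        case True then show ?thesis using V by (auto simp: Phi_sub_mon)
      next
        case False then show ?thesis using V by (simp add: Phi_sub fin_mon fin_fzero Phi_mon Phi_zero)
      qed
    next
      case (E1 e) then show ?thesis by (auto simp: Phi_sub_mon)
    next
      case (E1' e) then show ?thesis by (simp add: Phi_sub_mon)
    next
      case (E2 e) then show ?thesis using act_VG[OF B, of e] by (simp only: Phi_sub_mon) simp
    next
      case (E2' e) then show ?thesis using act_GV[OF B, of e] by (simp only: Phi_sub_mon) simp
    next
      case (CK1 e f)
      show ?thesis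
      proof (cases "e = f")
        case True then show ?thesis using CK1 act_GE[OF B, of e f] by (simp add: Phi_sub_mon)
      next
        case False
        then have "act s r [Gh e, Ed f] x = None" using act_GE[OF B, of e f] by simp
        then show ?thesis using CK1 False by (simp add: Phi_sub fin_mon fin_fzero Phi_mon Phi_zero)
      qed
    next
      case (CK2 v)
      have fv: "finite {e. s e = v}" using CK2(2) by (simp add: regular_def)
      have "Phi s r x y h = (if act s r [V v] x = Some y then 1 else 0) -
          (\<Sum>e\<in>{e. s e = v}. if act s r [Ed e, Gh e] x = Some y then 1 else 0)"
        using fv by (simp only: CK2(1) Phi_sub fin_mon fin_sum Phi_sum Phi_mon)
      also have "\<dots> = 0"
      proof (cases "src s x = v")
        case True
        then obtain e0 where e0: "fe x = Some e0" using fe_none[OF B] CK2(2) by (cases "fe x") auto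
        have se0: "s e0 = v" using fe_src[OF B e0] True by simp
        have "(\<Sum>e\<in>{e. s e = v}. if act s r [Ed e, Gh e] x = Some y then 1 else 0)
           = (\<Sum>e\<in>{e. s e = v}. if e = e0 then (if x = y then 1 else 0) else (0::'k))"
          by (rule sum.cong) (auto simp: act_EG[OF B] e0 simp del: act.simps)
        also have "\<dots> = (if x = y then 1 else 0)" using fv se0 by (simp add: sum.delta')
        finally show ?thesis using True by auto
      next
        case False
        have "(\<Sum>e\<in>{e. s e = v}. if act s r [Ed e, Gh e] x = Some y then 1 else (0::'k)) = 0"
          by (rule sum.neutral) (use False fe_src[OF B] in \<open>auto simp: act_EG[OF B] simp del: act.simps\<close>)
        then show ?thesis using False by simp
      qed
      finally show ?thesis .
    qed
  qed
  with fin show ?thesis by (simp add: Ginv_def)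
qed

lemma ideal_Ginv: "h \<in> lpa_ideal s r \<Longrightarrow> Ginv s r h"
proof (induction rule: lpa_ideal.induct)
  case (rel x) then show ?case by (rule rels_Ginv)
next
  case zero then show ?case by (simp add: Ginv_def fin_fzero Phi_zero)
next
  case (add x y) then show ?case by (blast intro: Ginv_add)
next
  case (scal x a) then show ?case by (blast intro: Ginv_scal)
next
  case (mult_left x f) then show ?case by (blast intro: Ginv_mul_left)
next
  case (mult_right x f) then show ?case by (blast intro: Ginv_mul_right)
qed

fun gseq :: "('e \<Rightarrow> 'v) \<Rightarrow> ('e \<Rightarrow> 'v) \<Rightarrow> 'v \<Rightarrow> nat \<Rightarrow> 'v" where
  "gseq s r v 0 = v"
| "gseq s r v (Suc n) = r (SOME e. s e = gseq s r v n)"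

lemma bp_exists: "\<exists>x. Bp s r x \<and> src s x = v"
proof -
  let ?g = "gseq s r v" and ?nx = "\<lambda>w. SOME e. s e = w"
  have nx: "s (?nx w) = w" if "regular s w" for w
    using that by (auto simp: regular_def intro: someI)
  show ?thesis
  proof (cases "\<forall>n. regular s (?g n)")
    case True
    let ?x = "Inf (\<lambda>n. ?nx (?g n))"
    have "\<forall>n. r (?nx (?g n)) = s (?nx (?g (Suc n)))"
    proof
      fix n
      have "s (?nx (?g (Suc n))) = ?g (Suc n)" using nx True by blast
      then show "r (?nx (?g n)) = s (?nx (?g (Suc n)))" by simp
    qed
    then have "Bp s r ?x" by simp
    moreover have "src s ?x = v" using nx[of v] True by (metis gseq.simps(1) src.simps(2))
    ultimately show ?thesis by blast
  next
    case False
    define N where "N = (LEAST n. \<not> regular s (?g n))"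
    have nN: "\<not> regular s (?g N)" unfolding N_def using False by (metis (mono_tags, lifting) LeastI)
    have rk: "regular s (?g k)" if "k < N" for k using that not_less_Least N_def by blast
    have ok: "okp s r (?g k) (map (\<lambda>i. ?nx (?g i)) [k..<N])" if "k \<le> N" for k
      using that
    proof (induction "N - k" arbitrary: k)
      case 0 then have "k = N" by simp
      then show ?case using nN by simp
    next
      case (Suc m)
      then have kN: "k < N" by simp
      have IH: "okp s r (?g (Suc k)) (map (\<lambda>i. ?nx (?g i)) [Suc k..<N])"
        using Suc.hyps(1)[of "Suc k"] Suc.hyps(2) kN by simp
      have "[k..<N] = k # [Suc k..<N]" using kN by (simp add: upt_conv_Cons)
      then show ?case using IH nx[OF rk[OF kN]] by simp
    qed
    have "Bp s r (Fin v (map (\<lambda>i. ?nx (?g i)) [0..<N]))" using ok[of 0] by simp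
    then show ?thesis by (metis src.simps(1))
  qed
qed

lemma vertex_nz: "(mon [V v] :: _ \<Rightarrow> 'k::field) \<notin> lpa_ideal s r"
proof
  assume "(mon [V v] :: _ \<Rightarrow> 'k::field) \<in> lpa_ideal s r"
  then have G: "Ginv s r (mon [V v] :: _ \<Rightarrow> 'k)" by (rule ideal_Ginv)
  from bp_exists[of s r v] obtain x where x: "Bp s r x" "src s x = v" by (elim exE conjE)
  have "Phi s r x x (mon [V v] :: _ \<Rightarrow> 'k) = 1" using x by (simp add: Phi_mon)
  moreover have "Phi s r x x (mon [V v] :: _ \<Rightarrow> 'k) = 0" using G x by (simp add: Ginv_def)
  ultimately show False by simp
qed


lemma fzero_apply: "fzero x = 0" by (simp add: fzero_def)

lemma fsum_list_Nil[simp]: "fsum_list [] = fzero"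
  by (rule ext) (simp add: fsum_list_def fzero_def)
lemma fsum_list_Cons[simp]: "fsum_list (a # xs) = fadd a (fsum_list xs)"
  by (rule ext) (simp add: fsum_list_def fadd_def)
lemma fadd_fzero[simp]: "fadd a fzero = a"
  by (rule ext) (simp add: fadd_def fzero_def)

lemma Fset_fsum_list: "set xs \<subseteq> Fset \<Longrightarrow> fsum_list xs \<in> Fset"
  by (induction xs) (auto intro: Fset_add)

lemma I_fsum_list: "set xs \<subseteq> lpa_ideal s r \<Longrightarrow> fsum_list xs \<in> lpa_ideal s r"
  by (induction xs) (auto intro: lpa_ideal.add lpa_ideal.zero)

context LT begin

lemma t_fsum_list: "set xs \<subseteq> Fset \<Longrightarrow> t (fsum_list xs) = (\<Sum>x\<leftarrow>xs. t x)"
  by (induction xs) (auto simp: t_add Fset_fsum_list)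

lemma eqv_weq: "weq s r u v TYPE('k) \<Longrightarrow> eqv s r (mon u :: _ \<Rightarrow> 'k) (mon v)"
  by (simp add: weq_def)

lemma proj_idem:
  assumes I: "finite I" "I \<subseteq> {e. s e = v}"
  defines "y \<equiv> fsub (mon [V v]) (fsum (\<lambda>e. mon [Ed e, Gh e]) I) :: ('v,'e) gen list \<Rightarrow> 'k"
  shows "eqv s r y (fmul y y)"
proof -
  let ?S = "fsum (\<lambda>e. mon [Ed e, Gh e]) I :: ('v,'e) gen list \<Rightarrow> 'k"
  have e: "fmul y y = fsub (fsub (mon [V v, V v]) (fsum (\<lambda>e. mon [V v, Ed e, Gh e]) I))
       (fsub (fsum (\<lambda>e. mon [Ed e, Gh e, V v]) I) (fsum (\<lambda>e. fsum (\<lambda>f. mon [Ed e, Gh e, Ed f, Gh f]) I) I))"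
    unfolding y_def
    apply (simp add: fmul_sub_left fmul_sub_right fmul_sum_left fmul_sum_right fmul_mon_mon)
    apply (rule ext)
    apply (simp add: fsub_def fsum_def sum_subtractf algebra_simps)
    apply (subst sum.swap)
    apply simp
    done
  have A: "eqv s r (mon [V v, V v] :: _ \<Rightarrow> 'k) (mon [V v])" by (rule eqv_weq[OF wVV])
  have B: "eqv s r (fsum (\<lambda>e. mon [V v, Ed e, Gh e]) I :: _ \<Rightarrow> 'k) ?S"
  proof (rule eqv_sum)
    fix e assume "e \<in> I"
    then have "v = s e" using I by auto
    then show "eqv s r (mon [V v, Ed e, Gh e] :: _ \<Rightarrow> 'k) (mon [Ed e, Gh e])"
      using eqv_weq[OF weq_ctx[OF wE1[of s r e "TYPE('k)"], where a="[]" and b="[Gh e]"]] by simp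
  qed
  have C: "eqv s r (fsum (\<lambda>e. mon [Ed e, Gh e, V v]) I :: _ \<Rightarrow> 'k) ?S"
  proof (rule eqv_sum)
    fix e assume "e \<in> I"
    then have "v = s e" using I by auto
    then show "eqv s r (mon [Ed e, Gh e, V v] :: _ \<Rightarrow> 'k) (mon [Ed e, Gh e])"
      using eqv_weq[OF weq_ctx[OF wE2'[of s r e "TYPE('k)"], where a="[Ed e]" and b="[]"]] by simp
  qed
  have D: "eqv s r (fsum (\<lambda>e. fsum (\<lambda>f. mon [Ed e, Gh e, Ed f, Gh f]) I) I :: _ \<Rightarrow> 'k)
             (fsum (\<lambda>e. fsum (\<lambda>f. if e = f then mon [Ed e, Gh e] else fzero) I) I)"
  proof (intro eqv_sum)
    fix e f
    show "eqv s r (mon [Ed e, Gh e, Ed f, Gh f] :: _ \<Rightarrow> 'k) (if e = f then mon [Ed e, Gh e] else fzero)"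
    proof (cases "e = f")
      case True
      have "weq s r ([Ed e] @ [Gh e, Ed e] @ [Gh e]) ([Ed e] @ [V (r e)] @ [Gh e]) TYPE('k)"
        by (intro weq_ctx wCK1)
      moreover have "weq s r ([] @ [Ed e, V (r e)] @ [Gh e]) ([] @ [Ed e] @ [Gh e]) TYPE('k)"
        by (intro weq_ctx wE1')
      ultimately have "weq s r [Ed e, Gh e, Ed e, Gh e] [Ed e, Gh e] TYPE('k)"
        using weq_trans by fastforce
      then show ?thesis using True by (simp add: eqv_weq)
    next
      case False
      have "wz s r ([Ed e] @ [Gh e, Ed f] @ [Gh f]) TYPE('k)" using False by (intro wz_ctx zCK1)
      then show ?thesis using False by (simp add: wz_def eqv_zero_iff)
    qed
  qed
  have D': "fsum (\<lambda>e. fsum (\<lambda>f. if e = f then mon [Ed e, Gh e] else fzero) I) I = ?S"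
  proof
    fix x :: "('v,'e) gen list"
    have app_if: "\<And>c f g. (if c then f else g) x = (if c then f x else g x)" by simp
    have h1: "\<And>a. (\<Sum>aa\<in>I. (if a = aa then mon [Ed a, Gh a] else fzero) x) = (if a \<in> I then mon [Ed a, Gh a] x else 0)"
      using I(1) by (simp only: app_if fzero_apply) (simp add: sum.delta')
    have h2: "\<And>a. (if a = aa then mon [Ed aa, Gh aa] else fzero) = (if a = aa then mon [Ed a, Gh a] else fzero)" for aa
      by simp
    have "fsum (\<lambda>e. fsum (\<lambda>f. if e = f then mon [Ed e, Gh e] else fzero) I) I x
        = (\<Sum>a\<in>I. \<Sum>aa\<in>I. (if a = aa then mon [Ed a, Gh a] else fzero) x)"
      by (simp add: fsum_def)
    also have "\<dots> = (\<Sum>a\<in>I. mon [Ed a, Gh a] x)" apply (rule sum.cong[OF refl]) apply (subst h1) apply simp done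
    also have "\<dots> = ?S x" by (simp add: fsum_def)
    finally show "fsum (\<lambda>e. fsum (\<lambda>f. if e = f then mon [Ed e, Gh e] else fzero) I) I x = ?S x" .
  qed
  have "eqv s r (fmul y y) (fsub (fsub (mon [V v]) ?S) (fsub ?S ?S))"
    unfolding e using A B C D D' by (intro eqv_sub) simp_all
  moreover have "fsub (fsub (mon [V v]) ?S) (fsub ?S ?S) = y"
    unfolding y_def by (rule ext) (simp add: fsub_def)
  ultimately show ?thesis by (simp add: eqv_sym)
qed

theorem main:
  "faithful s r ks rs t \<longleftrightarrow>
     (\<forall>v I. finite I \<longrightarrow> I \<subseteq> {e. s e = v} \<longrightarrow>
        nonneg rs (t (fsub (mon [V v]) (fsum (\<lambda>e. mon [V (r e)]) I))))
   \<and> (\<forall>v. positive rs (t (mon [V v])))"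
proof
  assume fa: "faithful s r ks rs t"
  have pos: "positive rs (t y)" if "y \<in> Fset" "eqv s r y (fmul y (fstar ks y))" "y \<notin> lpa_ideal s r" for y
  proof -
    have "lpa_positive s r ks y"
      unfolding lpa_positive_def
      using that by (intro conjI exI[of _ "[y]"]) (simp_all add: eqv_def)
    then show ?thesis using fa that(1) by (simp add: faithful_def)
  qed
  have F: "positive rs (t (mon [V v]))" for v
  proof (rule pos)
    show "mon [V v] \<in> Fset" by (simp add: Fset_mon)
    show "eqv s r (mon [V v]) (fmul (mon [V v]) (fstar ks (mon [V v])))"
      using eqv_weq[OF weq_sym[OF wVV]] by (simp add: fmul_mon_mon wstar_def)
    show "mon [V v] \<notin> lpa_ideal s r" by (rule vertex_nz)
  qed
  have P: "nonneg rs (t (fsub (mon [V v]) (fsum (\<lambda>e. mon [V (r e)]) I)))"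
    if I: "finite I" "I \<subseteq> {e. s e = v}" for v I
  proof -
    let ?y = "fsub (mon [V v]) (fsum (\<lambda>e. mon [Ed e, Gh e]) I) :: ('v,'e) gen list \<Rightarrow> 'k"
    have yF: "?y \<in> Fset" using I by (intro Fset_sub Fset_mon Fset_sum) auto
    have ys: "fstar ks ?y = ?y" by (simp add: fstar_sub fstar_sum wstar_def)
    have ty: "t ?y = t (fsub (mon [V v]) (fsum (\<lambda>e. mon [V (r e)]) I))"
    proof -
      have ee: "t (mon [Ed e, Gh e]) = t (mon [V (r e)])" for e
      proof -
        have "t (fmul (mon (path_word (PE [e]))) (fstar ks (mon (path_word (PE [e])))))
           = (if PE [e] = PE [e] then t (mon [V (path_range r (PE [e]))]) else 0)"
          using can[unfolded canonical_trace_def, rule_format, of "PE [e]" "PE [e]"] by simp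
        then show ?thesis by (simp add: fmul_mon_mon wstar_def)
      qed
      have "t ?y = t (mon [V v]) - (\<Sum>e\<in>I. t (mon [Ed e, Gh e]))"
        using I by (simp add: t_sub Fset_mon Fset_sum t_sum)
      also have "\<dots> = t (fsub (mon [V v]) (fsum (\<lambda>e. mon [V (r e)]) I))"
        using I by (simp add: ee t_vsum tau_def)
      finally show ?thesis .
    qed
    show ?thesis
    proof (cases "?y \<in> lpa_ideal s r")
      case True
      then have "t ?y = 0" by (rule t_ideal)
      then show ?thesis using ty by simp
    next
      case False
      have "positive rs (t ?y)" using pos[OF yF _ False] proj_idem[OF I] ys by simp
      then show ?thesis using ty by (simp add: positive_def)
    qed
  qed
  show "(\<forall>v I. finite I \<longrightarrow> I \<subseteq> {e. s e = v} \<longrightarrow>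
        nonneg rs (t (fsub (mon [V v]) (fsum (\<lambda>e. mon [V (r e)]) I))))
   \<and> (\<forall>v. positive rs (t (mon [V v])))" using P F by blast
next
  assume H: "(\<forall>v I. finite I \<longrightarrow> I \<subseteq> {e. s e = v} \<longrightarrow>
        nonneg rs (t (fsub (mon [V v]) (fsum (\<lambda>e. mon [V (r e)]) I))))
   \<and> (\<forall>v. positive rs (t (mon [V v])))"
  then have HP: "\<forall>v I. finite I \<longrightarrow> I \<subseteq> {e. s e = v} \<longrightarrow>
        nonneg rs (t (fsub (mon [V v]) (fsum (\<lambda>e. mon [V (r e)]) I)))"
    and HF: "\<forall>v. positive rs (t (mon [V v]))" by blast+
  note K = key[OF HP HF]
  show "faithful s r ks rs t" unfolding faithful_def
  proof (intro ballI impI)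
    fix x :: "('v,'e) gen list \<Rightarrow> 'k" assume xF: "x \<in> Fset" and lp: "lpa_positive s r ks x"
    then obtain zs where zs: "set zs \<subseteq> Fset"
      and xe: "fsub x (fsum_list (map (\<lambda>z. fmul z (fstar ks z)) zs)) \<in> lpa_ideal s r"
      and xn: "x \<notin> lpa_ideal s r"
      by (auto simp: lpa_positive_def)
    let ?L = "fsum_list (map (\<lambda>z. fmul z (fstar ks z)) zs)"
    have LF: "set (map (\<lambda>z. fmul z (fstar ks z)) zs) \<subseteq> Fset" using zs by (auto intro: Fset_mul Fset_star)
    have tx: "t x = (\<Sum>z\<leftarrow>zs. t (fmul z (fstar ks z)))"
    proof -
      have "t x = t ?L" using xe xF LF by (intro t_eqv) (simp_all add: Fset_fsum_list eqv_def)
      also have "\<dots> = (\<Sum>z\<leftarrow>zs. t (fmul z (fstar ks z)))" using LF by (simp add: t_fsum_list comp_def)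
      finally show ?thesis .
    qed
    have nn: "\<And>z. z \<in> set zs \<Longrightarrow> nonneg rs (t (fmul z (fstar ks z)))" using K zs by blast
    have "t x \<noteq> 0"
    proof
      assume "t x = 0"
      then have "\<And>z. z \<in> set zs \<Longrightarrow> t (fmul z (fstar ks z)) = 0"
        using pd_sum_list[of zs "\<lambda>z. t (fmul z (fstar ks z))", OF nn] tx by auto
      then have "\<And>z. z \<in> set zs \<Longrightarrow> z \<in> lpa_ideal s r" using K zs by blast
      then have "\<And>z. z \<in> set zs \<Longrightarrow> fmul z (fstar ks z) \<in> lpa_ideal s r"
        using zs by (blast intro: lpa_ideal.mult_right Fset_star)
      then have "?L \<in> lpa_ideal s r" by (intro I_fsum_list) auto
      then have "eqv s r ?L fzero" by (simp add: eqv_zero_iff)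
      with xe have "eqv s r x fzero" by (metis eqv_def eqv_trans)
      then show False using xn by (simp add: eqv_zero_iff)
    qed
    moreover have "nonneg rs (t x)" unfolding tx using nn by (rule nonneg_sum_list)
    ultimately show "positive rs (t x)" by (simp add: positive_def)
  qed
qed

end

theorem theorem3p5:
  fixes s r :: "'e \<Rightarrow> 'v"
    and ks :: "'k::field \<Rightarrow> 'k"
    and sc :: "'k \<Rightarrow> 'r::ring \<Rightarrow> 'r"
    and rs :: "'r \<Rightarrow> 'r"
    and t :: "(('v, 'e) gen list \<Rightarrow> 'k) \<Rightarrow> 'r"
  assumes "field_involution ks"
    and "involutive_algebra ks sc rs"
    and "positive_definite rs"
    and "lpa_trace s r t"
    and "K_linear_trace sc t"
    and "canonical_trace s r ks t"
  shows "faithful s r ks rs t \<longleftrightarrow>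
           (\<forall>v I. finite I \<longrightarrow> I \<subseteq> {e. s e = v} \<longrightarrow>
              nonneg rs (t (fsub (mon [V v]) (fsum (\<lambda>e. mon [V (r e)]) I))))
         \<and> (\<forall>v. positive rs (t (mon [V v])))"
proof -
  interpret LT ks s r sc rs t
    using assms by (unfold_locales) simp_all
  show ?thesis by (rule main)
qed


end
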